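(* Let $G$ be a planar PCC graph, let $v,v'$ be vertices and let $\sigma,\sigma'$ be faces with $\sigma\in F(v)$, $\sigma'\in F(v')$ and $|\sigma|,|\sigma'|\ge 20$. If $v$ and $v'$ are adjacent in $G$, then $\sigma=\sigma'$ and the edge $vv'$ lies on the boundary of $\sigma$ (i.e. $vv'\in E(\sigma)$).
   Context: $G$ is a finite simple connected graph 2-cell embedded in the sphere. For a face $\sigma$, $E(\sigma)$ is the multiset of edges on its boundary walk and $|\sigma|$ is its length; for a vertex $v$, $F(v)$ is the multiset of faces incident to $v$ (one per corner) and $K(v)=1-\frac{\deg(v)}{2}+\sum_{\sigma\in F(v)}\frac1{|\sigma|}$. A prism (resp. antiprism) of order $N$ is the planar graph with $2N$ vertices, two $N$-faces and $N$ quadrilaterals (resp. $2N$ triangles), each vertex incident to two quadrilaterals and one $N$-face (resp. three triangles and one $N$-face). A planar PCC graph is such a $G$ with $K(v)>0$, $\deg(v)\ge3$ for all $v$, not a prism or antiprism. *)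

theory Defs
  imports Complex_Main "HOL-Library.Multiset"
begin

text \<open>Combinatorial model of a finite simple connected graph 2-cell embedded in the
sphere: a vertex set V, a symmetric irreflexive adjacency relation Adj, and a rotation
system rho (for every vertex a cyclic permutation of the darts leaving it).
Faces are the orbits of the face-tracing permutation phi (u,v) = rho (v,u);
the embedding is spherical iff V - E + F = 2 (Euler).\<close>

definition darts :: "('v \<Rightarrow> 'v \<Rightarrow> bool) \<Rightarrow> ('v \<times> 'v) set" where
  "darts Adj = {(u, w). Adj u w}"

definition out_darts :: "('v \<Rightarrow> 'v \<Rightarrow> bool) \<Rightarrow> 'v \<Rightarrow> ('v \<times> 'v) set" where
  "out_darts Adj u = {(u, w) | w. Adj u w}"

definition deg :: "('v \<Rightarrow> 'v \<Rightarrow> bool) \<Rightarrow> 'v \<Rightarrow> nat" where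
  "deg Adj u = card (out_darts Adj u)"

definition simple_graph :: "'v set \<Rightarrow> ('v \<Rightarrow> 'v \<Rightarrow> bool) \<Rightarrow> bool" where
  "simple_graph V Adj \<longleftrightarrow> finite V \<and> (\<forall>u w. Adj u w \<longrightarrow> u \<in> V \<and> w \<in> V)
     \<and> (\<forall>u w. Adj u w \<longrightarrow> Adj w u) \<and> (\<forall>u. \<not> Adj u u)"

definition connected_graph :: "'v set \<Rightarrow> ('v \<Rightarrow> 'v \<Rightarrow> bool) \<Rightarrow> bool" where
  "connected_graph V Adj \<longleftrightarrow> V \<noteq> {} \<and> (\<forall>u\<in>V. \<forall>w\<in>V. Adj\<^sup>*\<^sup>* u w)"

definition rotation_system ::
  "'v set \<Rightarrow> ('v \<Rightarrow> 'v \<Rightarrow> bool) \<Rightarrow> ('v \<times> 'v \<Rightarrow> 'v \<times> 'v) \<Rightarrow> bool" where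
  "rotation_system V Adj rho \<longleftrightarrow>
     bij_betw rho (darts Adj) (darts Adj)
     \<and> (\<forall>u\<in>V. \<forall>d\<in>out_darts Adj u. rho d \<in> out_darts Adj u)
     \<and> (\<forall>u\<in>V. \<forall>d\<in>out_darts Adj u. \<forall>d'\<in>out_darts Adj u. \<exists>n. (rho ^^ n) d = d')"

definition face_perm :: "('v \<times> 'v \<Rightarrow> 'v \<times> 'v) \<Rightarrow> 'v \<times> 'v \<Rightarrow> 'v \<times> 'v" where
  "face_perm rho d = rho (snd d, fst d)"

definition face_of :: "('v \<times> 'v \<Rightarrow> 'v \<times> 'v) \<Rightarrow> 'v \<times> 'v \<Rightarrow> ('v \<times> 'v) set" where
  "face_of rho d = {(face_perm rho ^^ n) d | n. True}"

definition faces :: "('v \<Rightarrow> 'v \<Rightarrow> bool) \<Rightarrow> ('v \<times> 'v \<Rightarrow> 'v \<times> 'v) \<Rightarrow> ('v \<times> 'v) set set" where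
  "faces Adj rho = face_of rho ` darts Adj"

definition face_len :: "('v \<times> 'v) set \<Rightarrow> nat" where
  "face_len \<sigma> = card \<sigma>"

definition face_edges :: "('v \<times> 'v) set \<Rightarrow> 'v set multiset" where
  "face_edges \<sigma> = image_mset (\<lambda>(u, w). {u, w}) (mset_set \<sigma>)"

text \<open>F(v): multiset of faces incident to v, one per corner (one corner per dart leaving v).\<close>
definition faces_at ::
  "('v \<Rightarrow> 'v \<Rightarrow> bool) \<Rightarrow> ('v \<times> 'v \<Rightarrow> 'v \<times> 'v) \<Rightarrow> 'v \<Rightarrow> ('v \<times> 'v) set multiset" where
  "faces_at Adj rho u = image_mset (face_of rho) (mset_set (out_darts Adj u))"

definition num_edges :: "('v \<Rightarrow> 'v \<Rightarrow> bool) \<Rightarrow> nat" where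
  "num_edges Adj = card {{u, w} | u w. Adj u w}"

definition plane_embedded ::
  "'v set \<Rightarrow> ('v \<Rightarrow> 'v \<Rightarrow> bool) \<Rightarrow> ('v \<times> 'v \<Rightarrow> 'v \<times> 'v) \<Rightarrow> bool" where
  "plane_embedded V Adj rho \<longleftrightarrow> simple_graph V Adj \<and> connected_graph V Adj
     \<and> rotation_system V Adj rho
     \<and> int (card V) - int (num_edges Adj) + int (card (faces Adj rho)) = 2"

definition curv ::
  "('v \<Rightarrow> 'v \<Rightarrow> bool) \<Rightarrow> ('v \<times> 'v \<Rightarrow> 'v \<times> 'v) \<Rightarrow> 'v \<Rightarrow> real" where
  "curv Adj rho u = 1 - real (deg Adj u) / 2
     + (\<Sum>\<sigma>\<in>#faces_at Adj rho u. 1 / real (face_len \<sigma>))"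

text \<open>Prism / antiprism of order N, described by the combinatorial data of the paper:
2N vertices, two N-faces and N quadrilaterals (resp. 2N triangles), every vertex incident
to two quadrilaterals and one N-face (resp. three triangles and one N-face).\<close>
definition is_prism ::
  "'v set \<Rightarrow> ('v \<Rightarrow> 'v \<Rightarrow> bool) \<Rightarrow> ('v \<times> 'v \<Rightarrow> 'v \<times> 'v) \<Rightarrow> bool" where
  "is_prism V Adj rho \<longleftrightarrow> (\<exists>N::nat. N \<ge> 3 \<and> card V = 2 * N
     \<and> image_mset face_len (mset_set (faces Adj rho)) = {#N, N#} + replicate_mset N 4
     \<and> (\<forall>u\<in>V. image_mset face_len (faces_at Adj rho u) = {#4, 4, N#}))"

definition is_antiprism ::
  "'v set \<Rightarrow> ('v \<Rightarrow> 'v \<Rightarrow> bool) \<Rightarrow> ('v \<times> 'v \<Rightarrow> 'v \<times> 'v) \<Rightarrow> bool" where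
  "is_antiprism V Adj rho \<longleftrightarrow> (\<exists>N::nat. N \<ge> 3 \<and> card V = 2 * N
     \<and> image_mset face_len (mset_set (faces Adj rho)) = {#N, N#} + replicate_mset (2 * N) 3
     \<and> (\<forall>u\<in>V. image_mset face_len (faces_at Adj rho u) = {#3, 3, 3, N#}))"

definition planar_PCC ::
  "'v set \<Rightarrow> ('v \<Rightarrow> 'v \<Rightarrow> bool) \<Rightarrow> ('v \<times> 'v \<Rightarrow> 'v \<times> 'v) \<Rightarrow> bool" where
  "planar_PCC V Adj rho \<longleftrightarrow> plane_embedded V Adj rho
     \<and> (\<forall>u\<in>V. curv Adj rho u > 0 \<and> deg Adj u \<ge> 3)
     \<and> \<not> is_prism V Adj rho \<and> \<not> is_antiprism V Adj rho"

end

theory Submission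
  imports Defs
begin


section \<open>Orbits of injective self maps of finite sets\<close>

definition orb :: "('a \<Rightarrow> 'a) \<Rightarrow> 'a \<Rightarrow> 'a set" where
  "orb g x = {(g ^^ n) x | n. True}"

definition per :: "('a \<Rightarrow> 'a) \<Rightarrow> 'a \<Rightarrow> nat" where
  "per g x = (LEAST n. 0 < n \<and> (g ^^ n) x = x)"

lemma fp_in: "g ` S \<subseteq> S \<Longrightarrow> x \<in> S \<Longrightarrow> (g ^^ n) x \<in> S"
  by (induction n) auto

lemma fp_inj: "inj_on g S \<Longrightarrow> g ` S \<subseteq> S \<Longrightarrow> inj_on (g ^^ n) S"
proof (induction n)
  case 0 then show ?case by simp
next
  case (Suc n)
  have "(g ^^ n) ` S \<subseteq> S" using fp_in[OF Suc.prems(2)] by (simp add: image_subset_iff)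
  then have "inj_on g ((g ^^ n) ` S)" by (rule inj_on_subset[OF Suc.prems(1)])
  then have "inj_on (g \<circ> (g ^^ n)) S" by (rule comp_inj_on[OF Suc.IH[OF Suc.prems]])
  then show ?case by (simp add: o_def)
qed

locale finperm =
  fixes g :: "'a \<Rightarrow> 'a" and S :: "'a set"
  assumes fin: "finite S" and into: "g ` S \<subseteq> S" and inj: "inj_on g S"
begin

lemma fpin: "x \<in> S \<Longrightarrow> (g ^^ n) x \<in> S" by (rule fp_in[OF into])

lemma cancel: "x \<in> S \<Longrightarrow> y \<in> S \<Longrightarrow> (g ^^ n) x = (g ^^ n) y \<Longrightarrow> x = y"
  using fp_inj[OF inj into, of n] unfolding inj_on_def by blast

lemma exper: assumes "x \<in> S" shows "\<exists>n>0. (g ^^ n) x = x"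
proof -
  let ?h = "\<lambda>k. (g ^^ k) x"
  have "\<not> inj_on ?h {..card S}"
  proof
    assume "inj_on ?h {..card S}"
    moreover have "?h ` {..card S} \<subseteq> S" by (auto intro: fpin[OF assms])
    ultimately have "card {..card S} \<le> card S" using card_inj_on_le fin by blast
    then show False by simp
  qed
  then obtain i j where ij: "i \<le> card S" "j \<le> card S" "i \<noteq> j" "?h i = ?h j"
    unfolding inj_on_def by auto
  then have "\<exists>i j. i < j \<and> ?h i = ?h j"
  proof (cases "i < j")
    case True then show ?thesis using ij(4) by blast
  next
    case False then have "j < i" using ij(3) by simp
    then show ?thesis using ij(4) by (intro exI[of _ j] exI[of _ i]) simp
  qed
  then obtain i j where "i < j" "?h i = ?h j" by blast
  moreover have "i + (j - i) = j" using \<open>i < j\<close> by simp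
  ultimately have "(g ^^ i) ((g ^^ (j - i)) x) = (g ^^ i) x"
    by (metis funpow_add o_apply)
  then have "(g ^^ (j - i)) x = x" by (rule cancel[OF fpin[OF assms] assms])
  then show ?thesis using \<open>i < j\<close> by (intro exI[of _ "j - i"]) auto
qed

lemma per_both: "x \<in> S \<Longrightarrow> 0 < per g x \<and> (g ^^ per g x) x = x"
  unfolding per_def by (rule LeastI_ex[OF exper])

lemma per_pos: "x \<in> S \<Longrightarrow> 0 < per g x"
  using per_both by simp

lemma per_fix: "x \<in> S \<Longrightarrow> (g ^^ per g x) x = x"
  using per_both by simp

lemma per_min: assumes "0 < k" "k < per g x" shows "(g ^^ k) x \<noteq> x"
proof
  assume "(g ^^ k) x = x"
  with assms(1) have "per g x \<le> k" unfolding per_def by (intro Least_le) simp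
  with assms(2) show False by simp
qed

lemma fp_mult: "x \<in> S \<Longrightarrow> (g ^^ (per g x * m)) x = x"
proof (induction m)
  case 0 then show ?case by simp
next
  case (Suc m)
  have "(g ^^ (per g x * Suc m)) x = (g ^^ (per g x)) ((g ^^ (per g x * m)) x)"
    by (simp add: funpow_add add.commute)
  then show ?case using Suc per_fix by simp
qed

lemma fp_mod: assumes "x \<in> S" shows "(g ^^ k) x = (g ^^ (k mod per g x)) x"
proof -
  have "k = k mod per g x + per g x * (k div per g x)" by simp
  then have "(g ^^ k) x = (g ^^ (k mod per g x)) ((g ^^ (per g x * (k div per g x))) x)"
    by (metis funpow_add o_apply)
  then show ?thesis using fp_mult assms by simp
qed

lemma orb_alt: assumes "x \<in> S" shows "orb g x = (\<lambda>k. (g ^^ k) x) ` {..<per g x}"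
proof
  show "orb g x \<subseteq> (\<lambda>k. (g ^^ k) x) ` {..<per g x}"
  proof
    fix y assume "y \<in> orb g x"
    then obtain n where y: "y = (g ^^ n) x" unfolding orb_def by blast
    have "n mod per g x < per g x" using per_pos[OF assms] by simp
    moreover have "y = (g ^^ (n mod per g x)) x" using y fp_mod[OF assms] by simp
    ultimately show "y \<in> (\<lambda>k. (g ^^ k) x) ` {..<per g x}" by blast
  qed
  show "(\<lambda>k. (g ^^ k) x) ` {..<per g x} \<subseteq> orb g x" unfolding orb_def by blast
qed

lemma inj_pows: assumes "x \<in> S" shows "inj_on (\<lambda>k. (g ^^ k) x) {..<per g x}"
proof (rule inj_onI)
  fix i j assume i: "i \<in> {..<per g x}" and j: "j \<in> {..<per g x}" and e: "(g ^^ i) x = (g ^^ j) x"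
  show "i = j"
  proof (rule ccontr)
    assume "i \<noteq> j"
    then consider "i < j" | "j < i" by linarith
    then show False
    proof cases
      case 1
      then have "i + (j - i) = j" by simp
      then have "(g ^^ i) ((g ^^ (j - i)) x) = (g ^^ i) x"
        using e by (metis funpow_add o_apply)
      then have a: "(g ^^ (j - i)) x = x" by (rule cancel[OF fpin[OF assms] assms])
      have b: "j - i < per g x" "0 < j - i" using 1 j by auto
      show False using per_min[OF b(2) b(1)] a by simp
    next
      case 2
      then have "j + (i - j) = i" by simp
      then have "(g ^^ j) ((g ^^ (i - j)) x) = (g ^^ j) x"
        using e by (metis funpow_add o_apply)
      then have a: "(g ^^ (i - j)) x = x" by (rule cancel[OF fpin[OF assms] assms])
      have b: "i - j < per g x" "0 < i - j" using 2 i by auto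
      show False using per_min[OF b(2) b(1)] a by simp
    qed
  qed
qed

lemma card_orb: "x \<in> S \<Longrightarrow> card (orb g x) = per g x"
proof -
  assume x: "x \<in> S"
  have "card ((\<lambda>k. (g ^^ k) x) ` {..<per g x}) = card {..<per g x}"
    by (rule card_image[OF inj_pows[OF x]])
  then show ?thesis using orb_alt[OF x] by simp
qed

lemma orb_sub: "x \<in> S \<Longrightarrow> orb g x \<subseteq> S"
proof
  fix y assume "x \<in> S" "y \<in> orb g x"
  then obtain n where "y = (g ^^ n) x" unfolding orb_def by blast
  then show "y \<in> S" using fpin[OF \<open>x \<in> S\<close>] by simp
qed

lemma orb_self: "x \<in> orb g x"
  unfolding orb_def by (rule CollectI, rule exI[of _ 0]) simp

lemma orb_fin: "x \<in> S \<Longrightarrow> finite (orb g x)"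
  using orb_sub fin finite_subset by blast

lemma orb_mem: assumes "x \<in> S" "y \<in> orb g x" shows "orb g y = orb g x"
proof -
  obtain m where y: "y = (g ^^ m) x" using assms(2) unfolding orb_def by blast
  show ?thesis
  proof
    show "orb g y \<subseteq> orb g x"
    proof
      fix z assume "z \<in> orb g y"
      then obtain n where "z = (g ^^ n) y" unfolding orb_def by blast
      then have "z = (g ^^ (n + m)) x" unfolding y by (simp add: funpow_add)
      then show "z \<in> orb g x" unfolding orb_def by blast
    qed
    show "orb g x \<subseteq> orb g y"
    proof
      fix z assume "z \<in> orb g x"
      then obtain n where z: "z = (g ^^ n) x" unfolding orb_def by blast
      obtain q where q: "per g x = Suc q" using per_pos[OF assms(1)] gr0_implies_Suc by blast
      let ?k = "n + q * m"
      have "?k + m = n + per g x * m" unfolding q by simp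
      then have "(g ^^ ?k) y = (g ^^ (n + per g x * m)) x"
        unfolding y by (metis funpow_add o_apply)
      also have "\<dots> = (g ^^ n) ((g ^^ (per g x * m)) x)" by (simp add: funpow_add)
      finally have "(g ^^ ?k) y = (g ^^ n) ((g ^^ (per g x * m)) x)" .
      then have "(g ^^ ?k) y = z" using fp_mult assms(1) z by simp
      then show "z \<in> orb g y" unfolding orb_def by blast
    qed
  qed
qed

lemma orb_step: "x \<in> S \<Longrightarrow> orb g (g x) = orb g x"
proof -
  assume x: "x \<in> S"
  have "g x \<in> orb g x" unfolding orb_def by (rule CollectI, rule exI[of _ 1]) simp
  then show ?thesis using orb_mem x by blast
qed

end

lemma fp2: "(g ^^ 2) x = g (g x)" by (simp add: numeral_2_eq_2)
lemma fp3: "(g ^^ 3) x = g (g (g x))" by (simp add: numeral_3_eq_3)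
lemma fp4: "(g ^^ 4) x = g (g (g (g x)))"
  by (simp add: eval_nat_numeral)

section \<open>The planar PCC graph\<close>

locale pcc =
  fixes V :: "'v set" and Adj :: "'v \<Rightarrow> 'v \<Rightarrow> bool" and rho :: "'v \<times> 'v \<Rightarrow> 'v \<times> 'v"
  assumes pc: "planar_PCC V Adj rho"
begin

abbreviation "DD \<equiv> darts Adj"
abbreviation "out \<equiv> out_darts Adj"
abbreviation "phi \<equiv> face_perm rho"
abbreviation "ff \<equiv> face_of rho"

lemma pe: "plane_embedded V Adj rho" using pc unfolding planar_PCC_def by blast
lemma sg: "simple_graph V Adj" using pe unfolding plane_embedded_def by blast
lemma cg: "connected_graph V Adj" using pe unfolding plane_embedded_def by blast
lemma rs: "rotation_system V Adj rho" using pe unfolding plane_embedded_def by blast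
lemma euler: "int (card V) - int (num_edges Adj) + int (card (faces Adj rho)) = 2"
  using pe unfolding plane_embedded_def by blast
lemma curv_pos: "u \<in> V \<Longrightarrow> curv Adj rho u > 0" using pc unfolding planar_PCC_def by blast
lemma deg_ge3: "u \<in> V \<Longrightarrow> deg Adj u \<ge> 3" using pc unfolding planar_PCC_def by blast
lemma not_prism: "\<not> is_prism V Adj rho" using pc unfolding planar_PCC_def by blast
lemma not_anti: "\<not> is_antiprism V Adj rho" using pc unfolding planar_PCC_def by blast

lemma finV: "finite V" using sg unfolding simple_graph_def by blast
lemma adjV: "Adj u w \<Longrightarrow> u \<in> V \<and> w \<in> V" using sg unfolding simple_graph_def by blast
lemma adj_sym: "Adj u w \<Longrightarrow> Adj w u" using sg unfolding simple_graph_def by blast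
lemma adj_irr: "\<not> Adj u u" using sg unfolding simple_graph_def by blast

lemma in_DD: "(u, w) \<in> DD \<longleftrightarrow> Adj u w" unfolding darts_def by simp
lemma in_out: "d \<in> out u \<longleftrightarrow> d \<in> DD \<and> fst d = u"
  unfolding darts_def out_darts_def by (cases d) auto
lemma DD_sub: "DD \<subseteq> V \<times> V" using adjV unfolding darts_def by auto
lemma finDD: "finite DD" using DD_sub finV finite_subset by blast
lemma out_DD: "d \<in> out u \<Longrightarrow> d \<in> DD" using in_out by simp
lemma out_fst: "d \<in> out u \<Longrightarrow> fst d = u" using in_out by simp
lemma DD_out: "d \<in> DD \<Longrightarrow> d \<in> out (fst d)" using in_out by simp
lemma outDD: "out u \<subseteq> DD" using out_DD by (rule subsetI)
lemma fin_out: "finite (out u)"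
  by (rule finite_subset[OF outDD finDD])
lemma DD_fst: "d \<in> DD \<Longrightarrow> fst d \<in> V" using DD_sub by auto
lemma DD_snd: "d \<in> DD \<Longrightarrow> snd d \<in> V" using DD_sub by auto
lemma DD_rev: "(u, w) \<in> DD \<Longrightarrow> (w, u) \<in> DD" using in_DD adj_sym by blast
lemma DD_ne: "(u, w) \<in> DD \<Longrightarrow> u \<noteq> w" using in_DD adj_irr by blast

lemma rho_bij: "bij_betw rho DD DD" using rs unfolding rotation_system_def by blast
lemma rho_inj: "inj_on rho DD" using rho_bij bij_betw_def by blast
lemma rho_DD: "d \<in> DD \<Longrightarrow> rho d \<in> DD" using rho_bij bij_betwE by blast
lemma rho_fst: "d \<in> DD \<Longrightarrow> fst (rho d) = fst d"
proof -
  assume d: "d \<in> DD"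
  then have "d \<in> out (fst d)" using in_out by blast
  moreover have "fst d \<in> V" using DD_fst d by blast
  ultimately have "rho d \<in> out (fst d)" using rs unfolding rotation_system_def by blast
  then show ?thesis using in_out by blast
qed
lemma rho_pair: "(u, w) \<in> DD \<Longrightarrow> rho (u, w) = (u, snd (rho (u, w)))"
proof -
  assume "(u, w) \<in> DD"
  then have "fst (rho (u, w)) = u" using rho_fst by fastforce
  then show ?thesis by (cases "rho (u, w)") simp
qed
lemma rho_eq: "d \<in> DD \<Longrightarrow> e \<in> DD \<Longrightarrow> rho d = rho e \<Longrightarrow> d = e"
  using rho_inj unfolding inj_on_def by blast
lemma rho_out: "d \<in> out u \<Longrightarrow> rho d \<in> out u"
proof -
  assume "d \<in> out u"
  then have "d \<in> DD" "fst d = u" using in_out by auto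
  then show ?thesis using rho_DD rho_fst in_out by simp
qed
lemma rho_trans: "d \<in> out u \<Longrightarrow> d' \<in> out u \<Longrightarrow> \<exists>n. (rho ^^ n) d = d'"
proof -
  assume a: "d \<in> out u" "d' \<in> out u"
  then have u: "u \<in> V" using DD_fst[OF out_DD[OF a(1)]] out_fst[OF a(1)] by simp
  have H: "\<forall>u\<in>V. \<forall>d\<in>out u. \<forall>d'\<in>out u. \<exists>n. (rho ^^ n) d = d'"
    using rs unfolding rotation_system_def by (rule conjunct2[THEN conjunct2])
  show ?thesis by (rule bspec[OF bspec[OF bspec[OF H u] a(1)] a(2)])
qed

interpretation R: finperm rho DD
  by unfold_locales (use finDD rho_DD rho_inj in auto)

lemma phi_def2: "phi (u, w) = rho (w, u)" unfolding face_perm_def by simp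
lemma phi_DD: "d \<in> DD \<Longrightarrow> phi d \<in> DD"
  unfolding face_perm_def using DD_rev rho_DD by (cases d) auto
lemma phi_fst: "d \<in> DD \<Longrightarrow> fst (phi d) = snd d"
proof -
  assume d: "d \<in> DD"
  obtain u w where uw: "d = (u, w)" by (cases d)
  have "(w, u) \<in> DD" using DD_rev d uw by simp
  then show ?thesis unfolding face_perm_def uw using rho_fst by fastforce
qed
lemma phi_inj: "inj_on phi DD"
proof (rule inj_onI)
  fix d e assume "d \<in> DD" "e \<in> DD" "phi d = phi e"
  moreover have "(snd d, fst d) \<in> DD" "(snd e, fst e) \<in> DD"
    using DD_rev \<open>d \<in> DD\<close> \<open>e \<in> DD\<close> by (metis prod.collapse)+
  ultimately have "(snd d, fst d) = (snd e, fst e)" unfolding face_perm_def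
    using rho_eq by blast
  then show "d = e" by (simp add: prod_eq_iff)
qed

interpretation F: finperm phi DD
  by unfold_locales (use finDD phi_DD phi_inj in auto)

lemma ff_orb: "ff d = orb phi d" unfolding face_of_def orb_def by simp

lemma out_orb: assumes "d \<in> out u" shows "orb rho d = out u"
proof
  have d: "d \<in> DD" using out_DD[OF assms] .
  show "orb rho d \<subseteq> out u"
  proof
    fix e assume "e \<in> orb rho d"
    then obtain n where e: "e = (rho ^^ n) d" unfolding orb_def by blast
    have "(rho ^^ n) d \<in> out u"
    proof (induction n)
      case 0 then show ?case using assms by simp
    next
      case (Suc n) then show ?case using rho_out[OF Suc.IH] by simp
    qed
    then show "e \<in> out u" using e by simp
  qed
  show "out u \<subseteq> orb rho d"
  proof
    fix e assume e: "e \<in> out u"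
    obtain n where "(rho ^^ n) d = e" using rho_trans[OF assms e] ..
    then show "e \<in> orb rho d" unfolding orb_def by (intro CollectI exI[of _ n]) simp
  qed
qed

lemma deg_per: "d \<in> out u \<Longrightarrow> deg Adj u = per rho d"
proof -
  assume a: "d \<in> out u"
  then have "d \<in> DD" by (rule out_DD)
  then have "card (orb rho d) = per rho d" by (rule R.card_orb)
  then show ?thesis unfolding deg_def using out_orb[OF a] by simp
qed


lemma deg_pos_fix: assumes "d \<in> DD" shows "(rho ^^ deg Adj (fst d)) d = d"
  using deg_per[OF DD_out[OF assms]] R.per_fix[OF assms] by simp

lemma rho_ne1: assumes "d \<in> DD" shows "rho d \<noteq> d"
proof -
  have dd: "d \<in> out (fst d)" using DD_out[OF assms(1)] .
  have "3 \<le> per rho d" using deg_per[OF dd] deg_ge3[OF DD_fst[OF assms]] by simp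
  then show ?thesis using R.per_min[of 1 d] by simp
qed

lemma rho_ne2: assumes "d \<in> DD" shows "rho (rho d) \<noteq> d"
proof -
  have dd: "d \<in> out (fst d)" using DD_out[OF assms(1)] .
  have "3 \<le> per rho d" using deg_per[OF dd] deg_ge3[OF DD_fst[OF assms]] by simp
  then show ?thesis using R.per_min[of 2 d] by (simp add: fp2)
qed

lemma out3: assumes "d \<in> DD" "deg Adj (fst d) = 3"
  shows "out (fst d) = {d, rho d, rho (rho d)} \<and> rho (rho (rho d)) = d"
proof -
  have dd: "d \<in> out (fst d)" using DD_out[OF assms(1)] .
  have p: "per rho d = 3" using deg_per[OF dd] assms by simp
  have e1: "out (fst d) = (\<lambda>k. (rho ^^ k) d) ` {..<3}" using out_orb[OF dd] R.orb_alt[OF assms(1)] p by simp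
  have e2: "{..<3::nat} = {0,1,2}" by auto
  have e3: "(\<lambda>k. (rho ^^ k) d) ` {0,1,2} = {d, rho d, rho (rho d)}" by (simp add: fp2)
  have "out (fst d) = {d, rho d, rho (rho d)}" using e1 e2 e3 by simp
  moreover have "rho (rho (rho d)) = d" using R.per_fix[OF assms(1)] p by (simp add: fp3)
  ultimately show ?thesis by simp
qed

lemma out4: assumes "d \<in> DD" "deg Adj (fst d) = 4"
  shows "out (fst d) = {d, rho d, rho (rho d), rho (rho (rho d))} \<and> rho (rho (rho (rho d))) = d
    \<and> rho (rho (rho d)) \<noteq> d"
proof -
  have dd: "d \<in> out (fst d)" using DD_out[OF assms(1)] .
  have p: "per rho d = 4" using deg_per[OF dd] assms by simp
  have e1: "out (fst d) = (\<lambda>k. (rho ^^ k) d) ` {..<4}" using out_orb[OF dd] R.orb_alt[OF assms(1)] p by simp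
  have e2: "{..<4::nat} = {0,1,2,3}" by auto
  have e3: "(\<lambda>k. (rho ^^ k) d) ` {0,1,2,3} = {d, rho d, rho (rho d), rho (rho (rho d))}"
    by (simp add: fp2 fp3)
  have "out (fst d) = {d, rho d, rho (rho d), rho (rho (rho d))}" using e1 e2 e3 by simp
  moreover have "rho (rho (rho (rho d))) = d" using R.per_fix[OF assms(1)] p by (simp add: fp4)
  moreover have "rho (rho (rho d)) \<noteq> d" using R.per_min[of 3 d] p by (simp add: fp3)
  ultimately show ?thesis by simp
qed

section \<open>Faces\<close>

lemma ff_self: "d \<in> ff d" unfolding ff_orb by (rule F.orb_self)
lemma ff_mem: "d \<in> DD \<Longrightarrow> e \<in> ff d \<Longrightarrow> ff e = ff d" unfolding ff_orb by (rule F.orb_mem)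
lemma ff_phi: "d \<in> DD \<Longrightarrow> ff (phi d) = ff d" unfolding ff_orb by (rule F.orb_step)
lemma ff_sub: "d \<in> DD \<Longrightarrow> ff d \<subseteq> DD" unfolding ff_orb by (rule F.orb_sub)
lemma ff_fin: "d \<in> DD \<Longrightarrow> finite (ff d)" unfolding ff_orb by (rule F.orb_fin)
lemma ff_card: "d \<in> DD \<Longrightarrow> card (ff d) = per phi d" unfolding ff_orb by (rule F.card_orb)

lemma ff_ge3: assumes d: "d \<in> DD" shows "card (ff d) \<ge> 3"
proof -
  obtain u w where uw: "d = (u, w)" by (cases d)
  have p0: "0 < per phi d" using F.per_pos d by blast
  have n1: "phi d \<noteq> d" using phi_fst[OF d] DD_ne[of u w] d uw by auto
  have n2: "phi (phi d) \<noteq> d"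
  proof
    assume e: "phi (phi d) = d"
    have r1: "rho (w, u) \<in> DD" using rho_DD DD_rev d uw by blast
    obtain x where x: "rho (w, u) = (w, x)" using rho_pair DD_rev d uw by blast
    have "phi (phi d) = rho (x, w)" using x uw by (simp add: phi_def2)
    then have "rho (x, w) = (u, w)" using e uw by simp
    moreover have "(x, w) \<in> DD" using r1 x DD_rev by simp
    ultimately have "x = u" using rho_fst by fastforce
    then have "rho (w, u) = (w, u)" using x by simp
    then show False using rho_ne1 DD_rev d uw by blast
  qed
  have "per phi d \<noteq> 1" using F.per_fix[OF d] n1 by auto
  moreover have "per phi d \<noteq> 2" using F.per_fix[OF d] n2 by (auto simp: fp2)
  ultimately show ?thesis using ff_card d p0 by simp
qed

lemma tri: assumes "d \<in> DD" "card (ff d) = 3" shows "phi (phi (phi d)) = d"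
  using F.per_fix[OF assms(1)] ff_card assms by (simp add: fp3)
lemma quad: assumes "d \<in> DD" "card (ff d) = 4" shows "phi (phi (phi (phi d))) = d"
  using F.per_fix[OF assms(1)] ff_card assms by (simp add: fp4)

section \<open>Curvature\<close>

definition tt :: "'v \<times> 'v \<Rightarrow> real" where "tt d = 1 / real (card (ff d))"

lemma curv_sum: "curv Adj rho u = 1 - real (deg Adj u) / 2 + (\<Sum>d\<in>out u. tt d)"
proof -
  have "(\<Sum>\<sigma>\<in>#faces_at Adj rho u. 1 / real (face_len \<sigma>)) = (\<Sum>d\<in>out u. tt d)"
    unfolding faces_at_def tt_def face_len_def sum_unfold_sum_mset[of _ "out u"]
    by (simp add: multiset.map_comp o_def)
  then show ?thesis unfolding curv_def by simp
qed

lemma tt_le3: "d \<in> DD \<Longrightarrow> tt d \<le> 1/3"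
  unfolding tt_def using ff_ge3 by (simp add: divide_simps)
lemma tt_le: "d \<in> DD \<Longrightarrow> card (ff d) \<ge> k \<Longrightarrow> 0 < k \<Longrightarrow> tt d \<le> 1 / real k"
  unfolding tt_def by (simp add: divide_simps)

definition Lg :: "'v \<times> 'v \<Rightarrow> bool" where "Lg d \<longleftrightarrow> 20 \<le> card (ff d)"

lemma pos_sum: assumes "u \<in> V" shows "(\<Sum>d\<in>out u. tt d) > real (deg Adj u) / 2 - 1"
  using curv_pos[OF assms] curv_sum by simp

lemma sum_rest: assumes "A \<subseteq> DD" "finite A" shows "(\<Sum>d\<in>A. tt d) \<le> real (card A) / 3"
proof -
  have "(\<Sum>d\<in>A. tt d) \<le> of_nat (card A) * (1/3)"
    by (rule sum_bounded_above) (use assms tt_le3 in auto)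
  then show ?thesis by simp
qed


lemma NL: assumes l: "l \<in> out u" "Lg l"
  shows "deg Adj u \<le> 4"
    and "d \<in> out u \<Longrightarrow> d \<noteq> l \<Longrightarrow> \<not> Lg d"
    and "deg Adj u = 4 \<Longrightarrow> d \<in> out u \<Longrightarrow> d \<noteq> l \<Longrightarrow> card (ff d) = 3"
    and "deg Adj u = 3 \<Longrightarrow> d1 \<in> out u \<Longrightarrow> d2 \<in> out u \<Longrightarrow> d1 \<noteq> l \<Longrightarrow> d2 \<noteq> l \<Longrightarrow> d1 \<noteq> d2
          \<Longrightarrow> card (ff d1) \<ge> 4 \<Longrightarrow> card (ff d2) \<ge> 4 \<Longrightarrow> card (ff d1) = 4 \<and> card (ff d2) = 4"
proof -
  have lD: "l \<in> DD" using out_DD[OF l(1)] .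
  have u: "u \<in> V" using DD_fst[OF lD] out_fst[OF l(1)] by simp
  let ?n = "deg Adj u"
  have cn: "card (out u) = ?n" unfolding deg_def by simp
  have ps: "(\<Sum>d\<in>out u. tt d) > real ?n / 2 - 1" using pos_sum[OF u] .
  have tl: "tt l \<le> 1/20" using tt_le[OF lD, of 20] l(2) unfolding Lg_def by simp
  have s1: "(\<Sum>d\<in>out u. tt d) = tt l + (\<Sum>d\<in>out u - {l}. tt d)"
    using sum.remove[OF fin_out l(1)] .
  have c1: "card (out u - {l}) = ?n - 1" using cn l(1) fin_out by simp
  have n3: "?n \<ge> 3" using deg_ge3 u by simp
  show "?n \<le> 4"
  proof (rule ccontr)
    assume "\<not> ?n \<le> 4"
    have "(\<Sum>d\<in>out u - {l}. tt d) \<le> real (?n - 1) / 3"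
      using sum_rest[of "out u - {l}"] outDD fin_out c1 by auto
    then have "real ?n / 2 - 1 < 1/20 + real (?n - 1) / 3" using ps s1 tl by linarith
    moreover have "real (?n - 1) = real ?n - 1" using n3 by simp
    moreover have "real ?n \<ge> 5" using \<open>\<not> ?n \<le> 4\<close> by simp
    ultimately show False by linarith
  qed
  {
    fix d assume d: "d \<in> out u" "d \<noteq> l"
    have dD: "d \<in> DD" using out_DD[OF d(1)] .
    have s2: "(\<Sum>d\<in>out u - {l}. tt d) = tt d + (\<Sum>d\<in>out u - {l} - {d}. tt d)"
      using sum.remove[of "out u - {l}" d] fin_out d by simp
    have c2: "card (out u - {l} - {d}) = ?n - 2" using c1 d fin_out by simp
    have r2: "(\<Sum>d\<in>out u - {l} - {d}. tt d) \<le> real (?n - 2) / 3"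
      using sum_rest[of "out u - {l} - {d}"] outDD fin_out c2 by auto
    have e2: "real (?n - 2) = real ?n - 2" using n3 by simp
    show "\<not> Lg d"
    proof
      assume "Lg d"
      then have "tt d \<le> 1/20" using tt_le[OF dD, of 20] unfolding Lg_def by simp
      then have "real ?n / 2 - 1 < 1/20 + 1/20 + real (?n - 2) / 3" using ps s1 s2 tl r2 by linarith
      moreover have "real ?n \<ge> 3" using n3 by simp
      ultimately show False using e2 by linarith
    qed
    assume n4: "?n = 4"
    show "card (ff d) = 3"
    proof (rule ccontr)
      assume "card (ff d) \<noteq> 3"
      then have "card (ff d) \<ge> 4" using ff_ge3[OF dD] by simp
      then have "tt d \<le> 1/4" using tt_le[OF dD, of 4] by simp
      then have "real ?n / 2 - 1 < 1/20 + 1/4 + real (?n - 2) / 3" using ps s1 s2 tl r2 by linarith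
      moreover have "real ?n = 4" using n4 by simp
      ultimately show False using e2 by linarith
    qed
  }
  assume n3': "?n = 3" and d: "d1 \<in> out u" "d2 \<in> out u" "d1 \<noteq> l" "d2 \<noteq> l" "d1 \<noteq> d2"
    and g: "card (ff d1) \<ge> 4" "card (ff d2) \<ge> 4"
  have dD: "d1 \<in> DD" "d2 \<in> DD" using out_DD d by auto
  have s2: "(\<Sum>d\<in>out u - {l}. tt d) = tt d1 + (\<Sum>d\<in>out u - {l} - {d1}. tt d)"
    using sum.remove[of "out u - {l}" d1] fin_out d by simp
  have s3: "(\<Sum>d\<in>out u - {l} - {d1}. tt d) = tt d2 + (\<Sum>d\<in>out u - {l} - {d1} - {d2}. tt d)"
    using sum.remove[of "out u - {l} - {d1}" d2] fin_out d by simp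
  have c3: "card (out u - {l} - {d1} - {d2}) = 0" using c1 d fin_out n3' by simp
  then have e0: "out u - {l} - {d1} - {d2} = {}" using fin_out by simp
  have s4: "(\<Sum>d\<in>out u. tt d) = tt l + tt d1 + tt d2" using s1 s2 s3 unfolding e0 by simp
  show "card (ff d1) = 4 \<and> card (ff d2) = 4"
  proof (rule ccontr)
    assume "\<not> ?thesis"
    then have "card (ff d1) \<ge> 5 \<or> card (ff d2) \<ge> 5" using g by auto
    then have "tt d1 + tt d2 \<le> 1/4 + 1/5"
      using tt_le[OF dD(1), of 4] tt_le[OF dD(2), of 4] tt_le[OF dD(1), of 5] tt_le[OF dD(2), of 5] g
      by auto
    then show False using ps s4 tl n3' by simp
  qed
qed

end


context pcc begin

definition big :: "'v \<Rightarrow> bool" where "big u \<longleftrightarrow> u \<in> V \<and> (\<exists>d\<in>out u. Lg d)"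
definition lv :: "'v \<Rightarrow> 'v \<times> 'v" where "lv u = (SOME d. d \<in> out u \<and> Lg d)"
definition bad :: "'v \<Rightarrow> 'v \<Rightarrow> bool" where
  "bad v w \<longleftrightarrow> Adj v w \<and> big v \<and> big w \<and> \<not> Lg (v, w) \<and> \<not> Lg (w, v)"

lemma big_lv: assumes "big u" shows "lv u \<in> out u" "Lg (lv u)"
proof -
  have "\<exists>d. d \<in> out u \<and> Lg d" using assms unfolding big_def by blast
  then have "lv u \<in> out u \<and> Lg (lv u)" unfolding lv_def by (rule someI_ex)
  then show "lv u \<in> out u" "Lg (lv u)" by auto
qed

lemma lv_DD: "big u \<Longrightarrow> lv u \<in> DD" using big_lv out_DD by blast
lemma lv_fst: "big u \<Longrightarrow> fst (lv u) = u" using big_lv out_fst by blast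
lemma lv_pair: "big u \<Longrightarrow> lv u = (u, snd (lv u))" using lv_fst by (metis prod.collapse)

lemma big_small: assumes "big u" "d \<in> out u" "d \<noteq> lv u" shows "\<not> Lg d"
  using NL(2)[OF big_lv[OF assms(1)] assms(2,3)] .

lemma big_deg: assumes "big u" shows "deg Adj u = 3 \<or> deg Adj u = 4"
proof -
  have "u \<in> V" using assms unfolding big_def by blast
  then show ?thesis using NL(1)[OF big_lv[OF assms]] deg_ge3[of u] by linarith
qed

lemma big_tri: assumes "big u" "deg Adj u = 4" "d \<in> out u" "d \<noteq> lv u" shows "card (ff d) = 3"
  using NL(3)[OF big_lv[OF assms(1)] assms(2,3,4)] .

lemma big_uniq: assumes "big u" "d \<in> out u" "Lg d" shows "d = lv u"
  using big_small[OF assms(1,2)] assms(3) by blast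

lemma Lg_big: assumes "d \<in> DD" "Lg d" shows "big (fst d)" "lv (fst d) = d"
proof -
  have o: "d \<in> out (fst d)" using DD_out[OF assms(1)] .
  show b: "big (fst d)" unfolding big_def using o assms DD_fst by blast
  show "lv (fst d) = d" using big_uniq[OF b o assms(2)] by simp
qed

lemma Lg_phi: "d \<in> DD \<Longrightarrow> Lg (phi d) \<longleftrightarrow> Lg d" unfolding Lg_def using ff_phi by simp
lemma ff_rev: "(u, w) \<in> DD \<Longrightarrow> ff (w, u) = ff (rho (u, w))"
  using ff_phi[of "(w,u)"] DD_rev by (simp add: phi_def2)
lemma Lg_rev: "(u, w) \<in> DD \<Longrightarrow> Lg (w, u) \<longleftrightarrow> Lg (rho (u, w))"
  unfolding Lg_def using ff_rev by simp
lemma Lg_mem: "d \<in> DD \<Longrightarrow> e \<in> ff d \<Longrightarrow> Lg e \<longleftrightarrow> Lg d" unfolding Lg_def by (simp add: ff_mem)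
lemma not_Lg3: "card (ff d) = 3 \<Longrightarrow> \<not> Lg d" unfolding Lg_def by simp
lemma not_Lg4: "card (ff d) = 4 \<Longrightarrow> \<not> Lg d" unfolding Lg_def by simp

lemma rho_ex: assumes "(u, w) \<in> DD" obtains y where "rho (u, w) = (u, y)" "(u, y) \<in> DD"
  using rho_pair[OF assms] rho_DD[OF assms] by (metis)

lemma bad_sym: "bad v w \<Longrightarrow> bad w v" unfolding bad_def using adj_sym by blast

lemma bad_D: assumes "bad v w"
  shows "(v, w) \<in> DD" "(w, v) \<in> DD" "big v" "big w" "\<not> Lg (v, w)" "\<not> Lg (w, v)"
    "(v, w) \<in> out v" "(w, v) \<in> out w"
  using assms unfolding bad_def by (auto simp: in_DD adj_sym in_out)


lemma cl3: assumes "bad v v'" "deg Adj v = 3"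
  shows "(v, v') = rho (lv v)" "out v = {lv v, rho (lv v), rho (rho (lv v))}"
    "rho (rho (rho (lv v))) = lv v"
proof -
  note B = bad_D[OF assms(1)]
  have lD: "lv v \<in> DD" using lv_DD B(3) .
  have lf: "fst (lv v) = v" using lv_fst B(3) .
  have o3: "out v = {lv v, rho (lv v), rho (rho (lv v))}" "rho (rho (rho (lv v))) = lv v"
    using out3[OF lD] lf assms(2) by auto
  then show "out v = {lv v, rho (lv v), rho (rho (lv v))}" "rho (rho (rho (lv v))) = lv v" by auto
  have n1: "(v, v') \<noteq> lv v" using B(5) big_lv[OF B(3)] by auto
  have n2: "(v, v') \<noteq> rho (rho (lv v))"
  proof
    assume e: "(v, v') = rho (rho (lv v))"
    then have "rho (v, v') = lv v" using o3(2) by simp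
    then have "Lg (rho (v, v'))" using big_lv[OF B(3)] by simp
    then show False using Lg_rev[OF B(1)] B(6) by simp
  qed
  show "(v, v') = rho (lv v)" using B(7) o3(1) n1 n2 by auto
qed

lemma triA: assumes b: "bad v v'" and d3: "deg Adj v = 3" shows "card (ff (v, v')) \<noteq> 3"
proof
  assume t: "card (ff (v, v')) = 3"
  note B = bad_D[OF b]
  note C = cl3[OF b d3]
  let ?l = "lv v"
  have lD: "?l \<in> DD" using lv_DD B(3) .
  obtain y where y: "rho (v', v) = (v', y)" "(v', y) \<in> DD" using rho_ex[OF B(2)] by blast
  have yv': "(y, v') \<in> DD" using DD_rev y(2) .
  obtain z where z: "rho (y, v') = (y, z)" "(y, z) \<in> DD" using rho_ex[OF yv'] by blast
  have "phi (phi (phi (v, v'))) = (v, v')" using tri[OF B(1) t] .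
  then have e1: "rho (z, y) = (v, v')" using y z by (simp add: phi_def2)
  have zy: "(z, y) \<in> DD" using DD_rev z(2) .
  have "fst (rho (z, y)) = z" using rho_fst[OF zy] by simp
  then have zv: "z = v" using e1 by simp
  have vy: "(v, y) \<in> DD" using zy zv by simp
  have "rho (v, y) = rho ?l" using e1 zv C(1) by simp
  then have vyl: "(v, y) = ?l" using rho_eq[OF vy lD] by simp
  then have Lvy: "Lg (v, y)" using big_lv[OF B(3)] by simp
  have yv: "(y, v) \<in> DD" using DD_rev vy .
  have "Lg (rho (y, v))" using Lg_rev[OF yv] Lvy by simp
  moreover note yv
  moreover have ryv: "rho (y, v) \<in> DD" using rho_DD[OF yv] .
  ultimately have ly: "big y" "lv y = rho (y, v)" using Lg_big[of "rho (y,v)"] rho_fst[OF yv] by auto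
  have bv': "big v'" using B(4) .
  have lv'o: "lv v' \<in> out v'" using big_lv[OF bv'] by simp
  have n1: "lv v' \<noteq> (v', v)" using B(6) big_lv[OF bv'] by auto
  have "(v', y) = phi (v, v')" using y by (simp add: phi_def2)
  then have "ff (v', y) = ff (v, v')" using ff_phi[OF B(1)] by simp
  then have n2: "lv v' \<noteq> (v', y)" using t big_lv[OF bv'] unfolding Lg_def by auto
  have n3: "lv v' \<noteq> rho (v', y)"
  proof
    assume e: "lv v' = rho (v', y)"
    then have "Lg (rho (v', y))" using big_lv[OF bv'] by simp
    then have "Lg (y, v')" using Lg_rev[OF y(2)] by simp
    then have "lv y = (y, v')" using Lg_big[OF yv'] by simp
    then have "rho (rho (y, v')) = (y, v')" using ly(2) z(1) zv by simp
    then show False using rho_ne2[OF yv'] by simp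
  qed
  have dv': "deg Adj v' = 3 \<or> deg Adj v' = 4" using big_deg[OF bv'] .
  then show False
  proof
    assume "deg Adj v' = 3"
    then have "out v' = {(v', v), rho (v', v), rho (rho (v', v))}" using out3[OF B(2)] by simp
    then show False using lv'o n1 n2 n3 y(1) by auto
  next
    assume d4: "deg Adj v' = 4"
    have tB: "card (ff (v', v)) = 3" using big_tri[OF bv' d4 B(8)] n1 by simp
    have rvv: "rho (v, v') \<in> DD" using rho_DD[OF B(1)] .
    obtain s where s: "rho (v, v') = (v, s)" "(v, s) \<in> DD" using rho_ex[OF B(1)] by blast
    have sv: "(s, v) \<in> DD" using DD_rev s(2) .
    obtain t where tt: "rho (s, v) = (s, t)" "(s, t) \<in> DD" using rho_ex[OF sv] by blast
    have "phi (phi (phi (v', v))) = (v', v)" using tri[OF B(2) tB] .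
    then have e2: "rho (t, s) = (v', v)" using s tt by (simp add: phi_def2)
    have ts: "(t, s) \<in> DD" using DD_rev tt(2) .
    have "fst (rho (t, s)) = t" using rho_fst[OF ts] by simp
    then have tv: "t = v'" using e2 by simp
    have v's: "(v', s) \<in> DD" using ts tv by simp
    have o4: "out v' = {(v', v), rho (v', v), rho (rho (v', v)), rho (rho (rho (v', v)))}"
      "rho (rho (rho (rho (v', v)))) = (v', v)"
      using out4[OF B(2)] d4 by auto
    have "lv v' = rho (rho (rho (v', v)))" using o4(1) lv'o n1 n2 n3 y(1) by auto
    moreover have "rho (rho (rho (rho (v', v)))) = rho (v', s)" using o4(2) e2 tv by simp
    moreover have "rho (rho (rho (v', v))) \<in> DD" using rho_DD B(2) by simp
    ultimately have "lv v' = (v', s)" using rho_eq[OF _ v's] by simp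
    then have "Lg (v', s)" using big_lv[OF bv'] by simp
    then have "Lg (rho (s, v'))" using Lg_rev[of s v'] DD_rev[OF v's] by simp
    moreover have "rho (s, v') \<in> DD" using rho_DD DD_rev[OF v's] by simp
    ultimately have ls1: "lv s = rho (s, v')" using Lg_big[of "rho (s, v')"] rho_fst DD_rev[OF v's] by auto
    have "rho (v, s) = ?l" using s(1) C(1) C(3) by simp
    then have "Lg (rho (v, s))" using big_lv[OF B(3)] by simp
    then have "Lg (s, v)" using Lg_rev[OF s(2)] by simp
    then have ls2: "lv s = (s, v)" using Lg_big[OF sv] by simp
    have "rho (rho (s, v)) = (s, v)" using ls1 ls2 tt(1) tv by simp
    then show False using rho_ne2[OF sv] by simp
  qed
qed


lemma triB: assumes b: "bad v v'" and d3: "deg Adj v = 3" shows "card (ff (v', v)) \<noteq> 3"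
proof
  assume t: "card (ff (v', v)) = 3"
  note B = bad_D[OF b]
  note C = cl3[OF b d3]
  let ?l = "lv v"
  have lD: "?l \<in> DD" using lv_DD B(3) .
  have bv': "big v'" using B(4) .
  have lv'o: "lv v' \<in> out v'" using big_lv[OF bv'] by simp
  obtain s where s: "rho (v, v') = (v, s)" "(v, s) \<in> DD" using rho_ex[OF B(1)] by blast
  have sv: "(s, v) \<in> DD" using DD_rev s(2) .
  obtain t where tt: "rho (s, v) = (s, t)" "(s, t) \<in> DD" using rho_ex[OF sv] by blast
  have "phi (phi (phi (v', v))) = (v', v)" using tri[OF B(2) t] .
  then have e2: "rho (t, s) = (v', v)" using s tt by (simp add: phi_def2)
  have ts: "(t, s) \<in> DD" using DD_rev tt(2) .
  have "fst (rho (t, s)) = t" using rho_fst[OF ts] by simp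
  then have tv: "t = v'" using e2 by simp
  have v's: "(v', s) \<in> DD" using ts tv by simp
  have s'v: "(s, v') \<in> DD" using DD_rev v's .
  have "rho (v, s) = ?l" using s(1) C(1) C(3) by simp
  then have "Lg (rho (v, s))" using big_lv[OF B(3)] by simp
  then have "Lg (s, v)" using Lg_rev[OF s(2)] by simp
  then have ls2: "lv s = (s, v)" using Lg_big[OF sv] by simp
  have n1: "lv v' \<noteq> (v', v)" using B(6) big_lv[OF bv'] by auto
  have n2: "lv v' \<noteq> rho (v', v)"
  proof
    assume "lv v' = rho (v', v)"
    then have "Lg (rho (v', v))" using big_lv[OF bv'] by simp
    then have "Lg (v, v')" using Lg_rev[OF B(2)] by simp
    then show False using B(5) by simp
  qed
  have n3: "lv v' \<noteq> (v', s)"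
  proof
    assume "lv v' = (v', s)"
    then have "Lg (v', s)" using big_lv[OF bv'] by simp
    then have "Lg (rho (s, v'))" using Lg_rev[OF s'v] by simp
    moreover have "rho (s, v') \<in> DD" using rho_DD[OF s'v] .
    ultimately have "lv s = rho (s, v')" using Lg_big[of "rho (s, v')"] rho_fst[OF s'v] by auto
    then have "rho (rho (s, v)) = (s, v)" using ls2 tt(1) tv by simp
    then show False using rho_ne2[OF sv] by simp
  qed
  have rv's: "rho (v', s) = (v', v)" using e2 tv by simp
  have dv': "deg Adj v' = 3 \<or> deg Adj v' = 4" using big_deg[OF bv'] .
  then show False
  proof
    assume "deg Adj v' = 3"
    then have "out v' = {(v', s), rho (v', s), rho (rho (v', s))}" using out3[OF v's] by simp
    then show False using lv'o n1 n2 n3 rv's by auto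
  next
    assume d4: "deg Adj v' = 4"
    have ro: "rho (v', v) \<in> out v'" using rho_out[OF B(8)] .
    have "card (ff (rho (v', v))) = 3" using big_tri[OF bv' d4 ro] n2 by simp
    then have "card (ff (v, v')) = 3" using ff_rev[OF B(2)] by simp
    then show False using triA[OF b d3] by simp
  qed
qed

lemma deg3: assumes b: "bad v v'" and d3: "deg Adj v = 3"
  shows "card (ff (v, v')) = 4" "card (ff (v', v)) = 4" "deg Adj v' = 3"
proof -
  note B = bad_D[OF b]
  note C = cl3[OF b d3]
  let ?l = "lv v"
  have lD: "?l \<in> DD" using lv_DD B(3) .
  have g1: "card (ff (v, v')) \<ge> 4" using ff_ge3[OF B(1)] triA[OF b d3] by linarith
  have g2: "card (ff (v', v)) \<ge> 4" using ff_ge3[OF B(2)] triB[OF b d3] by linarith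
  have lo: "?l \<in> out v" using big_lv[OF B(3)] by simp
  have o2: "rho (rho ?l) \<in> out v" using rho_out[OF rho_out[OF lo]] .
  have f2: "ff (rho (rho ?l)) = ff (v', v)" using ff_rev[OF B(1)] C(1) by simp
  have ne1: "(v, v') \<noteq> ?l" using C(1) rho_ne1[OF lD] by simp
  have ne2: "rho (rho ?l) \<noteq> ?l" using rho_ne2[OF lD] .
  have ne3: "(v, v') \<noteq> rho (rho ?l)" using C(1) rho_ne1[OF rho_DD[OF lD]] by simp
  have "card (ff (v, v')) = 4 \<and> card (ff (rho (rho ?l))) = 4"
    using NL(4)[OF lo big_lv(2)[OF B(3)] d3 B(7) o2 ne1 ne2 ne3 g1] g2 f2 by simp
  then show c1: "card (ff (v, v')) = 4" and c2: "card (ff (v', v)) = 4" using f2 by auto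
  show "deg Adj v' = 3"
  proof (rule ccontr)
    assume "deg Adj v' \<noteq> 3"
    then have "deg Adj v' = 4" using big_deg[OF B(4)] by simp
    moreover have "(v', v) \<noteq> lv v'" using B(6) big_lv[OF B(4)] by auto
    ultimately have "card (ff (v', v)) = 3" using big_tri[OF B(4) _ B(8)] by simp
    then show False using c2 by simp
  qed
qed


lemma quadprop: assumes b: "bad v v'" and d3: "deg Adj v = 3"
  and x: "lv v = (v, x)" and y: "rho (v', v) = (v', y)"
  shows "bad x y" "lv x = rho (x, v)" "lv y = (y, v')" "deg Adj x = 3" "deg Adj y = 3"
    "ff (lv x) = ff (lv v)" "ff (lv y) = ff (lv v')"
proof -
  note B = bad_D[OF b]
  note C = cl3[OF b d3]
  note D3 = deg3[OF b d3]
  have b': "bad v' v" using bad_sym[OF b] .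
  note C' = cl3[OF b' D3(3)]
  have vx: "(v, x) \<in> DD" using lv_DD[OF B(3)] x by simp
  have xv: "(x, v) \<in> DD" using DD_rev[OF vx] .
  have v'y: "(v', y) \<in> DD" using rho_DD[OF B(2)] y by simp
  have yv': "(y, v') \<in> DD" using DD_rev[OF v'y] .
  have "rho (v', y) = lv v'" using C'(1) C'(3) y by simp
  then have "Lg (rho (v', y))" using big_lv[OF B(4)] by simp
  then have Lyv': "Lg (y, v')" using Lg_rev[OF v'y] by simp
  show ly: "lv y = (y, v')" using Lg_big[OF yv' Lyv'] by simp
  have bgy: "big y" using Lg_big[OF yv' Lyv'] by simp
  have "ff (lv y) = ff (rho (v', y))" using ly ff_rev[OF v'y] by simp
  then show "ff (lv y) = ff (lv v')" using \<open>rho (v', y) = lv v'\<close> by simp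
  obtain z where z: "rho (y, v') = (y, z)" "(y, z) \<in> DD" using rho_ex[OF yv'] by blast
  have zy: "(z, y) \<in> DD" using DD_rev[OF z(2)] .
  obtain t where t: "rho (z, y) = (z, t)" "(z, t) \<in> DD" using rho_ex[OF zy] by blast
  have "phi (phi (phi (phi (v, v')))) = (v, v')" using quad[OF B(1) D3(1)] .
  then have e: "rho (t, z) = (v, v')" using y z t by (simp add: phi_def2)
  have tz: "(t, z) \<in> DD" using DD_rev[OF t(2)] .
  have "fst (rho (t, z)) = t" using rho_fst[OF tz] by simp
  then have tv: "t = v" using e by simp
  have vz: "(v, z) \<in> DD" using tz tv by simp
  have "rho (v, z) = rho (lv v)" using e tv C(1) by simp
  then have "(v, z) = lv v" using rho_eq[OF vz lv_DD[OF B(3)]] by simp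
  then have zx: "z = x" using x by simp
  have ryv': "rho (y, v') = (y, x)" using z zx by simp
  have rxy: "rho (x, y) = (x, v)" using t tv zx by simp
  have xy: "(x, y) \<in> DD" using zy zx by simp
  have yx: "(y, x) \<in> DD" using z zx by simp
  have "Lg (v, x)" using big_lv[OF B(3)] x by simp
  then have Lrxv: "Lg (rho (x, v))" using Lg_rev[OF xv] by simp
  have rxvD: "rho (x, v) \<in> DD" using rho_DD[OF xv] .
  have fx: "fst (rho (x, v)) = x" using rho_fst[OF xv] by simp
  have bx: "big x" using Lg_big[OF rxvD Lrxv] fx by simp
  show lx: "lv x = rho (x, v)" using Lg_big[OF rxvD Lrxv] fx by simp
  show "ff (lv x) = ff (lv v)" using lx ff_rev[OF xv] x by simp
  have nxy: "\<not> Lg (x, y)"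
  proof
    assume "Lg (x, y)"
    then have "lv x = (x, y)" using Lg_big[OF xy] by simp
    then have "rho (rho (x, y)) = (x, y)" using lx rxy by simp
    then show False using rho_ne2[OF xy] by simp
  qed
  have nyx: "\<not> Lg (y, x)"
  proof
    assume "Lg (y, x)"
    then have "lv y = (y, x)" using Lg_big[OF yx] by simp
    then have "rho (y, v') = (y, v')" using ly ryv' by simp
    then show False using rho_ne1[OF yv'] by simp
  qed
  show "bad x y" unfolding bad_def using xy bx bgy nxy nyx in_DD by simp
  have A1: "ff (x, v) = ff (v, v')"
  proof -
    have "(x, v) = phi (phi (phi (v, v')))" using y ryv' rxy by (simp add: phi_def2)
    then show ?thesis using ff_phi phi_DD B(1) by simp
  qed
  have A2: "ff (y, x) = ff (v, v')"
  proof -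
    have "(y, x) = phi (phi (v, v'))" using y ryv' by (simp add: phi_def2)
    then show ?thesis using ff_phi phi_DD B(1) by simp
  qed
  show "deg Adj x = 3"
  proof (rule ccontr)
    assume "deg Adj x \<noteq> 3"
    then have d4: "deg Adj x = 4" using big_deg[OF bx] by simp
    have "(x, v) \<noteq> lv x" using lx rho_ne1[OF xv] by simp
    then have "card (ff (x, v)) = 3" using big_tri[OF bx d4] DD_out[OF xv] by simp
    then show False using A1 D3(1) by simp
  qed
  show "deg Adj y = 3"
  proof (rule ccontr)
    assume "deg Adj y \<noteq> 3"
    then have d4: "deg Adj y = 4" using big_deg[OF bgy] by simp
    have "(y, x) \<noteq> lv y" using ly ryv' rho_ne1[OF yv'] by simp
    then have "card (ff (y, x)) = 3" using big_tri[OF bgy d4] DD_out[OF yx] by simp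
    then show False using A2 D3(1) by simp
  qed
qed


lemma tri_at: assumes va: "(v, a) \<in> DD" and t: "card (ff (v, a)) = 3" and vp: "(v, p) \<in> DD"
  and r: "rho (v, p) = (v, a)"
  shows "rho (a, v) = (a, p)" "rho (p, a) = (p, v)"
proof -
  have av: "(a, v) \<in> DD" using DD_rev[OF va] .
  obtain p' where p': "rho (a, v) = (a, p')" "(a, p') \<in> DD" using rho_ex[OF av] by blast
  have pa: "(p', a) \<in> DD" using DD_rev[OF p'(2)] .
  obtain q where q: "rho (p', a) = (p', q)" "(p', q) \<in> DD" using rho_ex[OF pa] by blast
  have "phi (phi (phi (v, a))) = (v, a)" using tri[OF va t] .
  then have e: "rho (q, p') = (v, a)" using p' q by (simp add: phi_def2)
  have qp: "(q, p') \<in> DD" using DD_rev[OF q(2)] .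
  have "fst (rho (q, p')) = q" using rho_fst[OF qp] by simp
  then have qv: "q = v" using e by simp
  have vp': "(v, p') \<in> DD" using qp qv by simp
  have "rho (v, p') = rho (v, p)" using e qv r by simp
  then have "(v, p') = (v, p)" using rho_eq[OF vp' vp] by simp
  then have "p' = p" by simp
  then show "rho (a, v) = (a, p)" "rho (p, a) = (p, v)" using p' q qv by auto
qed

lemma deg4prop: assumes b: "bad v v'" and d4: "deg Adj v = 4"
  and x: "lv v = (v, x)" and a: "rho (lv v) = (v, a)" and bb: "rho (rho (lv v)) = (v, b)"
  and s: "rho (rho (rho (lv v))) = (v, s)"
  shows "out v = {(v, x), (v, a), (v, b), (v, s)}" "v' = a \<or> v' = b"
    "bad v a" "bad v b" "bad x a" "bad s b"
    "ff (lv a) = ff (lv b)" "ff (lv x) = ff (lv v)" "ff (lv s) = ff (lv v)"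
proof -
  note B = bad_D[OF b]
  let ?l = "lv v"
  have lD: "?l \<in> DD" using lv_DD B(3) .
  have lf: "fst ?l = v" using lv_fst B(3) .
  have o4: "out v = {?l, rho ?l, rho (rho ?l), rho (rho (rho ?l))}" "rho (rho (rho (rho ?l))) = ?l"
    "rho (rho (rho ?l)) \<noteq> ?l"
    using out4[OF lD] lf d4 by auto
  show ov: "out v = {(v, x), (v, a), (v, b), (v, s)}" using o4(1) x a bb s by simp
  have vx: "(v, x) \<in> DD" using lD x by simp
  have va: "(v, a) \<in> DD" using rho_DD[OF lD] a by simp
  have vb: "(v, b) \<in> DD" using rho_DD[OF rho_DD[OF lD]] bb by simp
  have vs: "(v, s) \<in> DD" using rho_DD[OF rho_DD[OF rho_DD[OF lD]]] s by simp
  have xv: "(x, v) \<in> DD" and av: "(a, v) \<in> DD" and bv: "(b, v) \<in> DD" and sv: "(s, v) \<in> DD"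
    using DD_rev vx va vb vs by auto
  have lo: "?l \<in> out v" using big_lv[OF B(3)] by simp
  have c1: "card (ff (v, a)) = 3"
    using big_tri[OF B(3) d4, of "(v,a)"] ov rho_ne1[OF lD] a by simp
  have c2: "card (ff (v, b)) = 3"
    using big_tri[OF B(3) d4, of "(v,b)"] ov rho_ne2[OF lD] bb by simp
  have c3: "card (ff (v, s)) = 3"
    using big_tri[OF B(3) d4, of "(v,s)"] ov o4(3) s by simp
  have T1: "rho (a, v) = (a, x)" "rho (x, a) = (x, v)"
    using tri_at[OF va c1 vx] a x by auto
  have T2: "rho (b, v) = (b, a)" "rho (a, b) = (a, v)"
    using tri_at[OF vb c2 va] a bb by auto
  have T3: "rho (s, v) = (s, b)" "rho (b, s) = (b, v)"
    using tri_at[OF vs c3 vb] bb s by auto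
  have ax: "(a, x) \<in> DD" using rho_DD[OF av] T1(1) by simp
  have xa: "(x, a) \<in> DD" using DD_rev[OF ax] .
  have ba: "(b, a) \<in> DD" using rho_DD[OF bv] T2(1) by simp
  have ab: "(a, b) \<in> DD" using DD_rev[OF ba] .
  have sb: "(s, b) \<in> DD" using rho_DD[OF sv] T3(1) by simp
  have bs: "(b, s) \<in> DD" using DD_rev[OF sb] .
  have "Lg (v, x)" using big_lv[OF B(3)] x by simp
  then have "Lg (rho (x, v))" using Lg_rev[OF xv] by simp
  then have lx: "big x" "lv x = rho (x, v)" using Lg_big[OF rho_DD[OF xv]] rho_fst[OF xv] by auto
  have "rho (v, s) = ?l" using s o4(2) by simp
  then have "Lg (rho (v, s))" using big_lv[OF B(3)] by simp
  then have "Lg (s, v)" using Lg_rev[OF vs] by simp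
  then have ls: "big s" "lv s = (s, v)" using Lg_big[OF sv] by auto
  show "ff (lv x) = ff (lv v)" using lx(2) ff_rev[OF xv] x by simp
  show "ff (lv s) = ff (lv v)" using ls(2) ff_rev[OF vs] \<open>rho (v, s) = ?l\<close> by simp
  have nav: "\<not> Lg (a, v)"
  proof -
    have "(a, v) = phi (phi (v, b))" using T2 by (simp add: phi_def2)
    then have "ff (a, v) = ff (v, b)" using ff_phi phi_DD vb by simp
    then show ?thesis using c2 not_Lg3 by simp
  qed
  have nax: "\<not> Lg (a, x)"
  proof -
    have "(a, x) = phi (v, a)" using T1 by (simp add: phi_def2)
    then have "ff (a, x) = ff (v, a)" using ff_phi va by simp
    then show ?thesis using c1 not_Lg3 by simp
  qed
  have nbv: "\<not> Lg (b, v)"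
  proof -
    have "(b, v) = phi (phi (v, s))" using T3 by (simp add: phi_def2)
    then have "ff (b, v) = ff (v, s)" using ff_phi phi_DD vs by simp
    then show ?thesis using c3 not_Lg3 by simp
  qed
  have nba: "\<not> Lg (b, a)"
  proof -
    have "(b, a) = phi (v, b)" using T2 by (simp add: phi_def2)
    then have "ff (b, a) = ff (v, b)" using ff_phi vb by simp
    then show ?thesis using c2 not_Lg3 by simp
  qed
  have nva: "\<not> Lg (v, a)" using big_small[OF B(3)] ov x rho_ne1[OF lD] a by auto
  have nvb: "\<not> Lg (v, b)" using big_small[OF B(3)] ov x rho_ne2[OF lD] bb by auto
  have nxa: "\<not> Lg (x, a)"
  proof
    assume "Lg (x, a)"
    then have "lv x = (x, a)" using Lg_big[OF xa] by simp
    then have "rho (rho (x, a)) = (x, a)" using lx T1 by simp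
    then show False using rho_ne2[OF xa] by simp
  qed
  have nbs: "\<not> Lg (b, s)"
  proof
    assume "Lg (b, s)"
    then have "Lg (rho (s, b))" using Lg_rev[OF sb] by simp
    then have "lv s = rho (s, b)" using Lg_big[OF rho_DD[OF sb]] rho_fst[OF sb] by auto
    then have "rho (rho (s, v)) = (s, v)" using ls T3 by simp
    then show False using rho_ne2[OF sv] by simp
  qed
  have nsb: "\<not> Lg (s, b)"
  proof
    assume "Lg (s, b)"
    then have "lv s = (s, b)" using Lg_big[OF sb] by simp
    then have "b = v" using ls by simp
    then show False using DD_ne[OF vb] by simp
  qed
  have vv': "(v, v') \<in> out v" using B(7) .
  have nl: "(v, v') \<noteq> (v, x)" using B(5) big_lv[OF B(3)] x by auto
  have nm: "(v, v') \<noteq> (v, s)"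
  proof
    assume "(v, v') = (v, s)"
    then have "Lg (rho (v, v'))" using \<open>Lg (rho (v, s))\<close> by simp
    then show False using Lg_rev[OF B(1)] B(6) by simp
  qed
  show vab: "v' = a \<or> v' = b" using vv' ov nl nm by auto
  have key: "big a \<and> lv a = (a, b)"
  proof (cases "v' = a")
    case True
    then have ba': "big a" using B(4) by simp
    have lao: "lv a \<in> out a" using big_lv[OF ba'] by simp
    have n1: "lv a \<noteq> (a, v)" using nav big_lv[OF ba'] by auto
    have n2: "lv a \<noteq> (a, x)" using nax big_lv[OF ba'] by auto
    have n3: "lv a \<noteq> rho (a, x)"
    proof
      assume "lv a = rho (a, x)"
      then have "Lg (rho (a, x))" using big_lv[OF ba'] by simp
      then have "Lg (x, a)" using Lg_rev[OF ax] by simp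
      then show False using nxa by simp
    qed
    have "deg Adj a = 3 \<or> deg Adj a = 4" using big_deg[OF ba'] .
    then show ?thesis
    proof
      assume "deg Adj a = 3"
      then have "out a = {(a, v), rho (a, v), rho (rho (a, v))}" using out3[OF av] by simp
      then show ?thesis using lao n1 n2 n3 T1 by auto
    next
      assume "deg Adj a = 4"
      then have o: "out a = {(a, v), rho (a, v), rho (rho (a, v)), rho (rho (rho (a, v)))}"
        "rho (rho (rho (rho (a, v)))) = (a, v)" using out4[OF av] by auto
      have "rho (rho (rho (rho (a, v)))) = rho (a, b)" using o(2) T2 by simp
      then have "rho (rho (rho (a, v))) = (a, b)"
        using rho_eq[OF rho_DD[OF rho_DD[OF rho_DD[OF av]]] ab] by simp
      then show ?thesis using o(1) lao n1 n2 n3 T1 ba' by auto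
    qed
  next
    case False
    then have vb': "v' = b" using vab by simp
    then have bb': "big b" using B(4) by simp
    have lbo: "lv b \<in> out b" using big_lv[OF bb'] by simp
    have n1: "lv b \<noteq> (b, v)" using nbv big_lv[OF bb'] by auto
    have n2: "lv b \<noteq> (b, a)" using nba big_lv[OF bb'] by auto
    have n3: "lv b \<noteq> (b, s)" using nbs big_lv[OF bb'] by auto
    have "deg Adj b = 3 \<or> deg Adj b = 4" using big_deg[OF bb'] .
    then have "lv b = rho (b, a)"
    proof
      assume "deg Adj b = 3"
      then have o: "out b = {(b, v), rho (b, v), rho (rho (b, v))}" "rho (rho (rho (b, v))) = (b, v)"
        using out3[OF bv] by auto
      have "rho (rho (rho (b, v))) = rho (b, s)" using o(2) T3 by simp
      then have "rho (rho (b, v)) = (b, s)"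
        using rho_eq[OF rho_DD[OF rho_DD[OF bv]] bs] by simp
      then show ?thesis using o(1) lbo n1 n2 n3 T2 by auto
    next
      assume "deg Adj b = 4"
      then have o: "out b = {(b, v), rho (b, v), rho (rho (b, v)), rho (rho (rho (b, v)))}"
        "rho (rho (rho (rho (b, v)))) = (b, v)" using out4[OF bv] by auto
      have "rho (rho (rho (rho (b, v)))) = rho (b, s)" using o(2) T3 by simp
      then have "rho (rho (rho (b, v))) = (b, s)"
        using rho_eq[OF rho_DD[OF rho_DD[OF rho_DD[OF bv]]] bs] by simp
      then show ?thesis using o(1) lbo n1 n2 n3 T2 by auto
    qed
    then have "Lg (rho (b, a))" using big_lv[OF bb'] by simp
    then have "Lg (a, b)" using Lg_rev[OF ba] by simp
    then show ?thesis using Lg_big[OF ab] by simp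
  qed
  have "Lg (a, b)" using key big_lv by metis
  then have "Lg (rho (b, a))" using Lg_rev[OF ba] by simp
  then have lb: "big b" "lv b = rho (b, a)" using Lg_big[OF rho_DD[OF ba]] rho_fst[OF ba] by auto
  show "ff (lv a) = ff (lv b)" using key lb ff_rev[OF ba] by simp
  show "bad v a" unfolding bad_def using va B(3) key nva nav in_DD by simp
  show "bad v b" unfolding bad_def using vb B(3) lb nvb nbv in_DD by simp
  show "bad x a" unfolding bad_def using xa lx key nxa nax in_DD by simp
  show "bad s b" unfolding bad_def using sb ls lb nsb nbs in_DD by simp
qed


lemma pair_ex: "fst d = u \<Longrightarrow> \<exists>x. d = (u, x)" by (cases d) auto

lemma bad_nb: assumes b: "bad v v'" and z: "Adj v z"
  shows "\<exists>t. bad z t \<and> (ff (lv v) = ff (lv v') \<longrightarrow> ff (lv t) = ff (lv z) \<and> ff (lv z) = ff (lv v))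
     \<and> (deg Adj v = 3 \<longrightarrow> deg Adj z = 3)"
proof -
  note B = bad_D[OF b]
  have lD: "lv v \<in> DD" using lv_DD B(3) .
  have lf: "fst (lv v) = v" using lv_fst B(3) .
  have vz: "(v, z) \<in> out v" using z in_out in_DD by simp
  obtain x where x: "lv v = (v, x)" using pair_ex[OF lf] by blast
  have "deg Adj v = 3 \<or> deg Adj v = 4" using big_deg[OF B(3)] .
  then show ?thesis
  proof
    assume d3: "deg Adj v = 3"
    note C = cl3[OF b d3]
    obtain y where y: "rho (v', v) = (v', y)" using rho_ex[OF B(2)] by blast
    note Q = quadprop[OF b d3 x y]
    have d3': "deg Adj v' = 3" using deg3[OF b d3] by simp
    have b': "bad v' v" using bad_sym[OF b] .
    obtain x' where x': "lv v' = (v', x')" using pair_ex[OF lv_fst[OF B(4)]] by blast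
    obtain s where s: "rho (v, v') = (v, s)" using rho_ex[OF B(1)] by blast
    note Q' = quadprop[OF b' d3' x' s]
    have "out v = {(v, x), (v, v'), (v, s)}" using C x s by simp
    then have "z = x \<or> z = v' \<or> z = s" using vz by auto
    then show ?thesis
    proof (elim disjE)
      assume "z = x" then show ?thesis using Q d3 by (intro exI[of _ y]) auto
    next
      assume "z = v'" then show ?thesis using b' d3' by (intro exI[of _ v]) auto
    next
      assume "z = s" then show ?thesis using Q' bad_sym d3 by (intro exI[of _ x']) auto
    qed
  next
    assume d4: "deg Adj v = 4"
    obtain a where a: "rho (lv v) = (v, a)" using pair_ex[of "rho (lv v)" v] rho_fst[OF lD] lf by auto
    have lD2: "rho (lv v) \<in> DD" using rho_DD[OF lD] .
    obtain bb where bb: "rho (rho (lv v)) = (v, bb)"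
      using pair_ex[of "rho (rho (lv v))" v] rho_fst[OF lD2] rho_fst[OF lD] lf by auto
    have lD3: "rho (rho (lv v)) \<in> DD" using rho_DD[OF lD2] .
    obtain s where s: "rho (rho (rho (lv v))) = (v, s)"
      using pair_ex[of "rho (rho (rho (lv v)))" v] rho_fst[OF lD3] rho_fst[OF lD2] rho_fst[OF lD] lf by auto
    note D = deg4prop[OF b d4 x a bb s]
    have sa: "ff (lv v) = ff (lv v') \<Longrightarrow> ff (lv a) = ff (lv v)" using D(2) D(7) by auto
    have "z = x \<or> z = a \<or> z = bb \<or> z = s" using vz D(1) by auto
    then show ?thesis
    proof (elim disjE)
      assume "z = x" then show ?thesis using D sa d4 by (intro exI[of _ a]) auto
    next
      assume "z = a" then show ?thesis using D sa d4 bad_sym by (intro exI[of _ v]) auto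
    next
      assume "z = bb" then show ?thesis using D sa d4 bad_sym by (intro exI[of _ v]) auto
    next
      assume "z = s" then show ?thesis using D sa d4 by (intro exI[of _ bb]) auto
    qed
  qed
qed

lemma closure: assumes "P u0" "\<And>u z. P u \<Longrightarrow> Adj u z \<Longrightarrow> P z" "u0 \<in> V" "w \<in> V" shows "P w"
proof -
  have "Adj\<^sup>*\<^sup>* u0 w" using cg assms(3,4) unfolding connected_graph_def by blast
  then show ?thesis
  proof (induction rule: rtranclp_induct)
    case base then show ?case using assms(1) .
  next
    case (step y z) then show ?case using assms(2) by blast
  qed
qed

end


locale pccb = pcc +
  fixes v0 w0 assumes b0: "bad v0 w0"
begin

lemma allbad: "u \<in> V \<Longrightarrow> \<exists>t. bad u t"
proof -
  assume u: "u \<in> V"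
  have v0: "v0 \<in> V" using bad_D(3)[OF b0] unfolding big_def by blast
  show ?thesis
  proof (rule closure[of "\<lambda>u. \<exists>t. bad u t" v0])
    show "\<exists>t. bad v0 t" using b0 by blast
    fix u z assume "\<exists>t. bad u t" "Adj u z"
    then show "\<exists>t. bad z t" using bad_nb by blast
  qed (use v0 u in auto)
qed

lemma allbig: "u \<in> V \<Longrightarrow> big u"
  using allbad bad_D(3) by blast

definition del :: nat where "del = deg Adj v0"

lemma degs: "u \<in> V \<Longrightarrow> deg Adj u = del"
proof -
  assume u: "u \<in> V"
  have v0: "v0 \<in> V" using bad_D(3)[OF b0] unfolding big_def by blast
  have c3: "deg Adj u' = 3" if h: "\<exists>w\<in>V. deg Adj w = 3" and u': "u' \<in> V" for u'
  proof -
    obtain w where w: "w \<in> V" "deg Adj w = 3" using h by blast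
    show ?thesis
    proof (rule closure[of "\<lambda>u. deg Adj u = 3" w])
      fix u z assume a: "deg Adj u = 3" "Adj u z"
      then have "u \<in> V" using adjV by blast
      then obtain t where "bad u t" using allbad by blast
      then show "deg Adj z = 3" using bad_nb a by blast
    qed (use w u' in auto)
  qed
  show ?thesis
  proof (cases "\<exists>w\<in>V. deg Adj w = 3")
    case True
    then show ?thesis unfolding del_def using c3 u v0 by metis
  next
    case False
    then have "\<forall>w\<in>V. deg Adj w = 4" using allbig big_deg by blast
    then show ?thesis unfolding del_def using u v0 by metis
  qed
qed

lemma del34: "del = 3 \<or> del = 4"
proof -
  have v0: "v0 \<in> V" using bad_D(3)[OF b0] unfolding big_def by blast
  show ?thesis using big_deg[OF allbig[OF v0]] degs[OF v0] by simp
qed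

definition sz :: nat where "sz = (if del = 3 then 4 else 3)"

lemma small_faces: assumes d: "d \<in> DD" "\<not> Lg d" shows "card (ff d) = sz"
proof -
  let ?u = "fst d"
  have u: "?u \<in> V" using DD_fst[OF d(1)] .
  have bu: "big ?u" using allbig[OF u] .
  have dout: "d \<in> out ?u" using DD_out[OF d(1)] .
  have dl: "d \<noteq> lv ?u" using d(2) big_lv[OF bu] by auto
  show ?thesis
  proof (cases "del = 3")
    case False
    then have "deg Adj ?u = 4" using degs[OF u] del34 by simp
    then show ?thesis using big_tri[OF bu _ dout dl] False unfolding sz_def by simp
  next
    case True
    then have d3: "deg Adj ?u = 3" using degs[OF u] by simp
    obtain t where t: "bad ?u t" using allbad[OF u] by blast
    note C = cl3[OF t d3]
    note D3 = deg3[OF t d3]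
    have "ff (t, ?u) = ff (rho (?u, t))" using ff_rev bad_D(1)[OF t] by blast
    then have f2: "card (ff (rho (rho (lv ?u)))) = 4" using D3(2) C(1) by simp
    have "d = rho (lv ?u) \<or> d = rho (rho (lv ?u))" using C(2) dout dl by auto
    then show ?thesis using D3(1) C(1) f2 True unfolding sz_def by (metis)
  qed
qed


abbreviation "FF \<equiv> faces Adj rho"
definition "LF = {X \<in> FF. 20 \<le> card X}"
definition "SF = {X \<in> FF. card X < 20}"

lemma FF_fin: "finite FF" unfolding faces_def by (rule finite_imageI[OF finDD])
lemma FF_mem: "X \<in> FF \<Longrightarrow> \<exists>d\<in>DD. X = ff d" unfolding faces_def by (rule imageE) auto
lemma FF_finX: "X \<in> FF \<Longrightarrow> finite X"
proof -
  assume "X \<in> FF"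
  then obtain d where "d \<in> DD" "X = ff d" using FF_mem by blast
  then show "finite X" using ff_fin by simp
qed
lemma FF_disj: "pairwise disjnt FF"
proof (rule pairwiseI)
  fix X Y assume X: "X \<in> FF" and Y: "Y \<in> FF" and ne: "X \<noteq> Y"
  obtain d where d: "d \<in> DD" "X = ff d" using FF_mem[OF X] by blast
  obtain e where e: "e \<in> DD" "Y = ff e" using FF_mem[OF Y] by blast
  show "disjnt X Y" unfolding disjnt_def
  proof (rule ccontr)
    assume "X \<inter> Y \<noteq> {}"
    then obtain z where z: "z \<in> ff d" "z \<in> ff e" using d e by blast
    have "ff z = ff d" "ff z = ff e" using ff_mem[OF d(1) z(1)] ff_mem[OF e(1) z(2)] by auto
    then show False using ne d e by simp
  qed
qed
lemma FF_Union: "\<Union>FF = DD"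
proof
  show "\<Union>FF \<subseteq> DD"
  proof
    fix z assume "z \<in> \<Union>FF"
    then obtain X where X: "X \<in> FF" "z \<in> X" by (rule UnionE)
    then obtain d where "d \<in> DD" "X = ff d" using FF_mem by blast
    then show "z \<in> DD" using ff_sub X(2) by blast
  qed
  show "DD \<subseteq> \<Union>FF"
  proof
    fix z assume "z \<in> DD"
    then have "ff z \<in> FF" unfolding faces_def by (rule imageI)
    then show "z \<in> \<Union>FF" using ff_self by (rule UnionI)
  qed
qed
lemma card_DD_faces: "card DD = (\<Sum>X\<in>FF. card X)"
proof -
  have "card (\<Union>FF) = sum card FF" by (rule card_Union_disjoint[OF FF_disj FF_finX])
  then show ?thesis unfolding FF_Union .
qed

lemma LF_SF: "FF = LF \<union> SF" "LF \<inter> SF = {}" "finite LF" "finite SF"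
proof -
  show "FF = LF \<union> SF" unfolding LF_def SF_def by (auto simp: not_le)
  show "LF \<inter> SF = {}" unfolding LF_def SF_def by auto
  show "finite LF" unfolding LF_def using FF_fin by simp
  show "finite SF" unfolding SF_def using FF_fin by simp
qed

lemma LF_Union: "\<Union>LF = {d \<in> DD. Lg d}"
proof
  show "\<Union>LF \<subseteq> {d \<in> DD. Lg d}"
  proof
    fix z assume "z \<in> \<Union>LF"
    then obtain X where X: "X \<in> LF" "z \<in> X" by blast
    obtain d where d: "d \<in> DD" "X = ff d" using FF_mem X(1) unfolding LF_def by blast
    have zd: "z \<in> ff d" using X(2) d(2) by simp
    have "ff z = ff d" using ff_mem[OF d(1) zd] .
    moreover have "z \<in> DD" using ff_sub d X by blast
    ultimately show "z \<in> {d \<in> DD. Lg d}" using X d unfolding LF_def Lg_def by simp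
  qed
  show "{d \<in> DD. Lg d} \<subseteq> \<Union>LF"
  proof
    fix z assume z: "z \<in> {d \<in> DD. Lg d}"
    then have zD: "z \<in> DD" and zL: "Lg z" by auto
    have "ff z \<in> FF" unfolding faces_def using zD by (rule imageI)
    moreover have "20 \<le> card (ff z)" using zL unfolding Lg_def .
    ultimately have "ff z \<in> LF" unfolding LF_def by simp
    then show "z \<in> \<Union>LF" using ff_self by blast
  qed
qed

lemma Lg_set: "{d \<in> DD. Lg d} = lv ` V"
proof
  show "{d \<in> DD. Lg d} \<subseteq> lv ` V"
  proof
    fix d assume "d \<in> {d \<in> DD. Lg d}"
    then have d: "d \<in> DD" "Lg d" by auto
    then have "lv (fst d) = d" using Lg_big by blast
    moreover have "fst d \<in> V" using DD_fst d by blast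
    ultimately show "d \<in> lv ` V" by force
  qed
  show "lv ` V \<subseteq> {d \<in> DD. Lg d}" using allbig lv_DD big_lv by blast
qed

lemma lv_inj: "inj_on lv V"
  by (rule inj_onI) (metis allbig lv_fst)

lemma sum_LF: "(\<Sum>X\<in>LF. card X) = card V"
proof -
  have "pairwise disjnt LF" using FF_disj unfolding LF_def by (simp add: pairwise_def)
  moreover have "\<And>X. X \<in> LF \<Longrightarrow> finite X" using FF_finX unfolding LF_def by blast
  ultimately have "card (\<Union>LF) = (\<Sum>X\<in>LF. card X)" by (rule card_Union_disjoint)
  then show ?thesis using LF_Union Lg_set card_image[OF lv_inj] by simp
qed

lemma sum_SF: "(\<Sum>X\<in>SF. card X) = sz * card SF"
proof -
  have "\<And>X. X \<in> SF \<Longrightarrow> card X = sz"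
  proof -
    fix X assume X: "X \<in> SF"
    obtain d where d: "d \<in> DD" "X = ff d" using FF_mem X unfolding SF_def by blast
    have "\<not> Lg d" using X d unfolding SF_def Lg_def by simp
    then show "card X = sz" using small_faces d by simp
  qed
  then show ?thesis by simp
qed

lemma out_disj: "i \<noteq> j \<Longrightarrow> out i \<inter> out j = {}"
proof (rule ccontr)
  assume ne: "i \<noteq> j" and "out i \<inter> out j \<noteq> {}"
  then obtain d where "d \<in> out i" "d \<in> out j" by blast
  then have "fst d = i" "fst d = j" using out_fst[of d i] out_fst[of d j] by auto
  then show False using ne by simp
qed

lemma card_DD_V: "card DD = del * card V"
proof -
  have "DD = (\<Union>u\<in>V. out u)" using DD_out out_DD DD_fst by blast
  moreover have "card (\<Union>u\<in>V. out u) = (\<Sum>u\<in>V. card (out u))"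
    by (rule card_UN_disjoint) (use finV fin_out out_disj in auto)
  moreover have "(\<Sum>u\<in>V. card (out u)) = (\<Sum>u\<in>V. del)"
    using degs unfolding deg_def by simp
  ultimately show ?thesis by simp
qed

lemma edges: "2 * num_edges Adj = card DD"
proof -
  let ?E = "{{u, w} | u w. Adj u w}"
  let ?fib = "\<lambda>X. {d \<in> DD. {fst d, snd d} = X}"
  have E: "?E = (\<lambda>d. {fst d, snd d}) ` DD"
  proof
    show "?E \<subseteq> (\<lambda>d. {fst d, snd d}) ` DD"
    proof
      fix X assume "X \<in> ?E"
      then obtain u w where uw: "X = {u, w}" "Adj u w" by blast
      then have uwD: "(u, w) \<in> DD" using in_DD by simp
      have "{fst (u, w), snd (u, w)} \<in> (\<lambda>d. {fst d, snd d}) ` DD" using uwD by (rule imageI)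
      then show "X \<in> (\<lambda>d. {fst d, snd d}) ` DD" using uw by simp
    qed
    show "(\<lambda>d. {fst d, snd d}) ` DD \<subseteq> ?E"
    proof
      fix X assume "X \<in> (\<lambda>d. {fst d, snd d}) ` DD"
      then obtain d where d: "d \<in> DD" "X = {fst d, snd d}" by blast
      obtain a b where ab: "d = (a, b)" by (cases d)
      have "Adj a b" using d(1) ab in_DD by simp
      then show "X \<in> ?E" using d(2) ab by (intro CollectI exI[of _ a] exI[of _ b]) simp
    qed
  qed
  have finE: "finite ?E" unfolding E by (rule finite_imageI[OF finDD])
  have U: "DD = (\<Union>X\<in>?E. ?fib X)"
  proof
    show "DD \<subseteq> (\<Union>X\<in>?E. ?fib X)"
    proof
      fix d assume d: "d \<in> DD"
      have "{fst d, snd d} \<in> ?E" unfolding E using d by (rule imageI)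
      moreover have "d \<in> ?fib {fst d, snd d}" using d by simp
      ultimately show "d \<in> (\<Union>X\<in>?E. ?fib X)" by (rule UN_I)
    qed
    show "(\<Union>X\<in>?E. ?fib X) \<subseteq> DD" by blast
  qed
  have C: "card (\<Union>X\<in>?E. ?fib X) = (\<Sum>X\<in>?E. card (?fib X))"
  proof (rule card_UN_disjoint)
    show "finite ?E" using finE .
    show "\<forall>X\<in>?E. finite (?fib X)"
    proof
      fix X assume "X \<in> ?E" show "finite (?fib X)" by (rule finite_subset[OF _ finDD]) blast
    qed
    show "\<forall>X\<in>?E. \<forall>Y\<in>?E. X \<noteq> Y \<longrightarrow> ?fib X \<inter> ?fib Y = {}"
    proof (intro ballI impI)
      fix X Y assume "X \<in> ?E" "Y \<in> ?E" and ne: "X \<noteq> Y"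
      show "?fib X \<inter> ?fib Y = {}"
      proof (rule ccontr)
        assume "?fib X \<inter> ?fib Y \<noteq> {}"
        then obtain d where "d \<in> ?fib X" "d \<in> ?fib Y" by blast
        then have "X = {fst d, snd d}" "Y = {fst d, snd d}" by auto
        then show False using ne by simp
      qed
    qed
  qed
  have two: "card (?fib X) = 2" if X: "X \<in> ?E" for X
  proof -
    obtain u w where uw: "X = {u, w}" "Adj u w" using X by blast
    have ne: "u \<noteq> w" using uw adj_irr by blast
    have "?fib X = {(u, w), (w, u)}"
    proof
      show "?fib X \<subseteq> {(u, w), (w, u)}"
      proof
        fix d assume d: "d \<in> ?fib X"
        obtain a b where ab: "d = (a, b)" by (cases d)
        have "{a, b} = {u, w}" using d ab uw by simp
        then have "(a = u \<and> b = w) \<or> (a = w \<and> b = u)" by (simp add: doubleton_eq_iff)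
        then show "d \<in> {(u, w), (w, u)}" using ab by auto
      qed
      show "{(u, w), (w, u)} \<subseteq> ?fib X"
        using uw adj_sym[OF uw(2)] in_DD by (auto simp: insert_commute)
    qed
    then show ?thesis using ne by simp
  qed
  have "(\<Sum>X\<in>?E. card (?fib X)) = (\<Sum>X\<in>?E. 2)" by (rule sum.cong) (auto simp: two)
  then have "card DD = 2 * card ?E" using U C by simp
  then show ?thesis unfolding num_edges_def by simp
qed

lemma counts: "card LF = 2" "2 * card SF = card V \<or> del = 4"
  "del = 4 \<Longrightarrow> card SF = card V" "del = 3 \<Longrightarrow> 2 * card SF = card V"
proof -
  have cF: "card FF = card LF + card SF"
    unfolding LF_SF(1) by (rule card_Un_disjoint[OF LF_SF(3) LF_SF(4) LF_SF(2)])
  have sF: "(\<Sum>X\<in>FF. card X) = (\<Sum>X\<in>LF. card X) + (\<Sum>X\<in>SF. card X)"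
    unfolding LF_SF(1) by (rule sum.union_disjoint[OF LF_SF(3) LF_SF(4) LF_SF(2)])
  have a1: "del * card V = card V + sz * card SF"
    using card_DD_faces card_DD_V sF sum_LF sum_SF by simp
  have a2: "2 * num_edges Adj = del * card V" using edges card_DD_V by simp
  have eu: "int (card V) - int (num_edges Adj) + int (card LF) + int (card SF) = 2"
    using euler cF by simp
  have "card LF = 2 \<and> (del = 4 \<longrightarrow> card SF = card V) \<and> (del = 3 \<longrightarrow> 2 * card SF = card V)"
  proof (cases "del = 3")
    case True
    then have "3 * card V = card V + 4 * card SF" "2 * num_edges Adj = 3 * card V"
      using a1 a2 unfolding sz_def by auto
    then show ?thesis using eu True by linarith
  next
    case False
    then have d4: "del = 4" using del34 by simp
    then have "4 * card V = card V + 3 * card SF" "2 * num_edges Adj = 4 * card V"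
      using a1 a2 unfolding sz_def by auto
    then show ?thesis using eu d4 by linarith
  qed
  then show "card LF = 2" "del = 4 \<Longrightarrow> card SF = card V" "del = 3 \<Longrightarrow> 2 * card SF = card V"
    "2 * card SF = card V \<or> del = 4" using del34 by auto
qed


lemma lvLF: "u \<in> V \<Longrightarrow> ff (lv u) \<in> LF"
proof -
  assume u: "u \<in> V"
  have "lv u \<in> DD" using lv_DD allbig u by blast
  then have "ff (lv u) \<in> FF" unfolding faces_def by (rule imageI)
  moreover have "Lg (lv u)" using big_lv allbig u by blast
  ultimately show ?thesis unfolding LF_def Lg_def by simp
qed

lemma LF_lv: assumes "X \<in> LF" shows "\<exists>u\<in>V. X = ff (lv u)"
proof -
  obtain d where d: "d \<in> DD" "X = ff d" using FF_mem assms unfolding LF_def by blast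
  have "Lg d" using assms d unfolding LF_def Lg_def by simp
  then have "lv (fst d) = d" using Lg_big d by blast
  then show ?thesis using d DD_fst by metis
qed

lemma no_same: assumes b: "bad pp qq" shows "ff (lv pp) \<noteq> ff (lv qq)"
proof
  assume eq: "ff (lv pp) = ff (lv qq)"
  have pp: "pp \<in> V" using bad_D(3)[OF b] unfolding big_def by blast
  have all: "ff (lv z) = ff (lv pp)" if z: "z \<in> V" for z
  proof -
    have "\<exists>t. bad z t \<and> ff (lv t) = ff (lv z) \<and> ff (lv z) = ff (lv pp)"
    proof (rule closure[of "\<lambda>z. \<exists>t. bad z t \<and> ff (lv t) = ff (lv z) \<and> ff (lv z) = ff (lv pp)" pp])
      show "\<exists>t. bad pp t \<and> ff (lv t) = ff (lv pp) \<and> ff (lv pp) = ff (lv pp)" using b eq by auto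
      fix u z assume "\<exists>t. bad u t \<and> ff (lv t) = ff (lv u) \<and> ff (lv u) = ff (lv pp)" and a: "Adj u z"
      then obtain t where t: "bad u t" "ff (lv t) = ff (lv u)" "ff (lv u) = ff (lv pp)" by blast
      obtain t' where "bad z t'" "ff (lv u) = ff (lv t) \<longrightarrow> ff (lv t') = ff (lv z) \<and> ff (lv z) = ff (lv u)"
        using bad_nb[OF t(1) a] by blast
      then show "\<exists>t. bad z t \<and> ff (lv t) = ff (lv z) \<and> ff (lv z) = ff (lv pp)" using t by auto
    qed (use pp z in auto)
    then show ?thesis by blast
  qed
  have "LF \<subseteq> {ff (lv pp)}"
  proof
    fix X assume "X \<in> LF"
    then obtain u where "u \<in> V" "X = ff (lv u)" using LF_lv by blast
    then show "X \<in> {ff (lv pp)}" using all by simp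
  qed
  then have "card LF \<le> 1" using card_mono[of "{ff (lv pp)}" LF] by simp
  then show False using counts(1) by simp
qed

definition cr :: "'a \<Rightarrow> ('a \<times> 'a) set" where
  "cr u = {d \<in> out u. d \<noteq> lv u \<and> rho d \<noteq> lv u}"

lemma cross: assumes u: "u \<in> V" and d: "d \<in> out u"
  shows "ff (lv (snd d)) \<noteq> ff (lv u) \<longleftrightarrow> d \<in> cr u"
proof -
  obtain w where dw: "d = (u, w)" using pair_ex[OF out_fst[OF d]] by blast
  have uw: "(u, w) \<in> DD" using out_DD d dw by simp
  have wu: "(w, u) \<in> DD" using DD_rev[OF uw] .
  have bu: "big u" using allbig u .
  have w: "w \<in> V" using DD_snd[OF uw] by simp
  have bw: "big w" using allbig w .
  show ?thesis
  proof
    assume ne: "ff (lv (snd d)) \<noteq> ff (lv u)"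
    have n1: "d \<noteq> lv u"
    proof
      assume "d = lv u"
      then have "Lg (u, w)" using big_lv[OF bu] dw by simp
      then have "Lg (rho (w, u))" using Lg_rev[OF wu] by simp
      then have "lv w = rho (w, u)" using Lg_big[OF rho_DD[OF wu]] rho_fst[OF wu] by auto
      then have "ff (lv w) = ff (u, w)" using ff_rev[OF wu] by simp
      also have "(u, w) = lv u" using \<open>d = lv u\<close> dw by simp
      finally have "ff (lv (snd d)) = ff (lv u)" using dw by simp
      then show False using ne by simp
    qed
    have n2: "rho d \<noteq> lv u"
    proof
      assume "rho d = lv u"
      then have "Lg (rho (u, w))" using big_lv[OF bu] dw by simp
      then have "Lg (w, u)" using Lg_rev[OF uw] by simp
      then have "lv w = (w, u)" using Lg_big[OF wu] by simp
      then have "ff (lv w) = ff (rho (u, w))" using ff_rev[OF uw] by simp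
      also have "rho (u, w) = lv u" using \<open>rho d = lv u\<close> dw by simp
      finally have "ff (lv (snd d)) = ff (lv u)" using dw by simp
      then show False using ne by simp
    qed
    show "d \<in> cr u" unfolding cr_def using d n1 n2 by simp
  next
    assume c: "d \<in> cr u"
    then have n1: "d \<noteq> lv u" and n2: "rho d \<noteq> lv u" unfolding cr_def by auto
    have x1: "\<not> Lg (u, w)" using big_small[OF bu d n1] dw by simp
    have "\<not> Lg (rho (u, w))" using big_small[OF bu rho_out[OF d] n2] dw by simp
    then have x2: "\<not> Lg (w, u)" using Lg_rev[OF uw] by simp
    have "bad u w" unfolding bad_def using uw in_DD bu bw x1 x2 by simp
    then have "ff (lv u) \<noteq> ff (lv w)" by (rule no_same)
    then show "ff (lv (snd d)) \<noteq> ff (lv u)" using dw by simp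
  qed
qed

lemma card_cr: assumes u: "u \<in> V" shows "card (cr u) = del - 2"
proof -
  have bu: "big u" using allbig u .
  let ?l = "lv u"
  have lD: "?l \<in> DD" using lv_DD bu .
  have lf: "fst ?l = u" using lv_fst bu .
  show ?thesis
  proof (cases "del = 3")
    case True
    then have o: "out u = {?l, rho ?l, rho (rho ?l)}" "rho (rho (rho ?l)) = ?l"
      using out3[OF lD] lf degs[OF u] by auto
    have "cr u = {rho ?l}" unfolding cr_def using o rho_ne1[OF lD] rho_ne2[OF lD] by auto
    then show ?thesis using True by simp
  next
    case False
    then have d4: "del = 4" using del34 by simp
    then have o: "out u = {?l, rho ?l, rho (rho ?l), rho (rho (rho ?l))}"
      "rho (rho (rho (rho ?l))) = ?l" "rho (rho (rho ?l)) \<noteq> ?l"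
      using out4[OF lD] lf degs[OF u] by auto
    have "cr u = {rho ?l, rho (rho ?l)}" unfolding cr_def using o rho_ne1[OF lD] rho_ne2[OF lD] by auto
    moreover have "rho ?l \<noteq> rho (rho ?l)" using rho_ne1[OF rho_DD[OF lD]] by simp
    ultimately show ?thesis using d4 by simp
  qed
qed


lemma SF_card: "X \<in> SF \<Longrightarrow> card X = sz"
proof -
  fix X assume X: "X \<in> SF"
  obtain d where d: "d \<in> DD" "X = ff d" using FF_mem X unfolding SF_def by blast
  have "\<not> Lg d" using X d unfolding SF_def Lg_def by simp
  then show "card X = sz" using small_faces d by simp
qed

lemma XA_card: assumes AB: "LF = {A, B}" "A \<noteq> B"
  shows "card {d \<in> DD. ff (lv (fst d)) = A \<and> ff (lv (snd d)) = B} = (del - 2) * card {u \<in> V. ff (lv u) = A}"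
proof -
  let ?VA = "{u \<in> V. ff (lv u) = A}"
  have eq: "{d \<in> DD. ff (lv (fst d)) = A \<and> ff (lv (snd d)) = B} = (\<Union>u\<in>?VA. cr u)"
  proof
    show "{d \<in> DD. ff (lv (fst d)) = A \<and> ff (lv (snd d)) = B} \<subseteq> (\<Union>u\<in>?VA. cr u)"
    proof
      fix d assume "d \<in> {d \<in> DD. ff (lv (fst d)) = A \<and> ff (lv (snd d)) = B}"
      then have d: "d \<in> DD" "ff (lv (fst d)) = A" "ff (lv (snd d)) = B" by auto
      have u: "fst d \<in> V" using DD_fst d(1) .
      have o: "d \<in> out (fst d)" using DD_out d(1) .
      have "ff (lv (snd d)) \<noteq> ff (lv (fst d))" using d AB(2) by simp
      then have "d \<in> cr (fst d)" using cross[OF u o] by simp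
      moreover have "fst d \<in> ?VA" using u d by simp
      ultimately show "d \<in> (\<Union>u\<in>?VA. cr u)" by blast
    qed
    show "(\<Union>u\<in>?VA. cr u) \<subseteq> {d \<in> DD. ff (lv (fst d)) = A \<and> ff (lv (snd d)) = B}"
    proof
      fix d assume "d \<in> (\<Union>u\<in>?VA. cr u)"
      then obtain u where u: "u \<in> V" "ff (lv u) = A" and c: "d \<in> cr u" by blast
      have o: "d \<in> out u" using c unfolding cr_def by simp
      have dD: "d \<in> DD" using out_DD[OF o] .
      have f: "fst d = u" using out_fst[OF o] .
      have ne: "ff (lv (snd d)) \<noteq> A" using cross[OF u(1) o] c u(2) by simp
      have "ff (lv (snd d)) \<in> LF" using lvLF DD_snd[OF dD] by blast
      then have "ff (lv (snd d)) = B" using ne AB(1) by simp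
      then show "d \<in> {d \<in> DD. ff (lv (fst d)) = A \<and> ff (lv (snd d)) = B}" using dD f u by simp
    qed
  qed
  have "card (\<Union>u\<in>?VA. cr u) = (\<Sum>u\<in>?VA. card (cr u))"
  proof (rule card_UN_disjoint)
    show "finite ?VA" using finV by simp
    show "\<forall>u\<in>?VA. finite (cr u)"
    proof
      fix u assume "u \<in> ?VA"
      show "finite (cr u)" unfolding cr_def using fin_out by simp
    qed
    show "\<forall>i\<in>?VA. \<forall>j\<in>?VA. i \<noteq> j \<longrightarrow> cr i \<inter> cr j = {}"
    proof (intro ballI impI)
      fix i j assume "i \<in> ?VA" "j \<in> ?VA" "i \<noteq> j"
      then have "out i \<inter> out j = {}" using out_disj by blast
      then show "cr i \<inter> cr j = {}" unfolding cr_def by blast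
    qed
  qed
  also have "(\<Sum>u\<in>?VA. card (cr u)) = (\<Sum>u\<in>?VA. del - 2)"
    by (rule sum.cong) (auto simp: card_cr)
  finally show ?thesis using eq by simp
qed

lemma final: "is_prism V Adj rho \<or> is_antiprism V Adj rho"
proof -
  obtain A B where AB: "LF = {A, B}" "A \<noteq> B" using counts(1) card_2_iff by metis
  let ?VA = "{u \<in> V. ff (lv u) = A}"
  let ?VB = "{u \<in> V. ff (lv u) = B}"
  let ?XA = "{d \<in> DD. ff (lv (fst d)) = A \<and> ff (lv (snd d)) = B}"
  let ?XB = "{d \<in> DD. ff (lv (fst d)) = B \<and> ff (lv (snd d)) = A}"
  have cA: "card ?XA = (del - 2) * card ?VA" using XA_card[OF AB] .
  have cB: "card ?XB = (del - 2) * card ?VB" using XA_card[of B A] AB by (simp add: insert_commute)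
  have sw: "(\<lambda>d. (snd d, fst d)) ` ?XA = ?XB"
  proof
    show "(\<lambda>d. (snd d, fst d)) ` ?XA \<subseteq> ?XB"
    proof
      fix e assume "e \<in> (\<lambda>d. (snd d, fst d)) ` ?XA"
      then obtain d where d: "d \<in> ?XA" "e = (snd d, fst d)" by blast
      have "(snd d, fst d) \<in> DD" using d(1) DD_rev[of "fst d" "snd d"] by simp
      then show "e \<in> ?XB" using d by simp
    qed
    show "?XB \<subseteq> (\<lambda>d. (snd d, fst d)) ` ?XA"
    proof
      fix e assume e: "e \<in> ?XB"
      have "(snd e, fst e) \<in> DD" using e DD_rev[of "fst e" "snd e"] by simp
      then have "(snd e, fst e) \<in> ?XA" using e by simp
      moreover have "e = (snd (snd e, fst e), fst (snd e, fst e))" by simp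
      ultimately show "e \<in> (\<lambda>d. (snd d, fst d)) ` ?XA" by (rule image_eqI[rotated])
    qed
  qed
  have inj: "inj_on (\<lambda>d. (snd d, fst d)) ?XA" by (rule inj_onI) (simp add: prod_eq_iff)
  have "card ?XB = card ?XA" using card_image[OF inj] sw by simp
  moreover have "del - 2 > 0" using del34 by auto
  ultimately have eqAB: "card ?VA = card ?VB" using cA cB by simp
  have VAB: "V = ?VA \<union> ?VB" using lvLF AB(1) by auto
  have cV: "card V = card ?VA + card ?VB"
  proof -
    have "card (?VA \<union> ?VB) = card ?VA + card ?VB"
      by (rule card_Un_disjoint) (use finV AB(2) in auto)
    then show ?thesis using VAB by simp
  qed
  have cardX: "card X = card {u \<in> V. ff (lv u) = X}" if X: "X \<in> LF" for X
  proof -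
    let ?VX = "{u \<in> V. ff (lv u) = X}"
    have "X = lv ` ?VX"
    proof
      show "X \<subseteq> lv ` ?VX"
      proof
        fix e assume e: "e \<in> X"
        obtain u where u: "u \<in> V" "X = ff (lv u)" using LF_lv X by blast
        have lD: "lv u \<in> DD" using lv_DD allbig u(1) by blast
        have eu: "e \<in> ff (lv u)" using e u by simp
        have fe: "ff e = X" using ff_mem[OF lD eu] u by simp
        have eD: "e \<in> DD" using ff_sub[OF lD] eu by blast
        have "Lg e" using fe X unfolding LF_def Lg_def by simp
        then have le: "lv (fst e) = e" using Lg_big eD by blast
        have "fst e \<in> ?VX" using DD_fst[OF eD] le fe by simp
        then show "e \<in> lv ` ?VX" using le by force
      qed
      show "lv ` ?VX \<subseteq> X" using ff_self by blast
    qed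
    moreover have "inj_on lv ?VX" using lv_inj by (rule inj_on_subset) blast
    ultimately show ?thesis using card_image by metis
  qed
  define N where "N = card ?VA"
  have NA: "card A = N" using cardX[of A] AB N_def by simp
  have NB: "card B = N" using cardX[of B] AB N_def eqAB by simp
  have cVN: "card V = 2 * N" using cV eqAB N_def by simp
  have N20: "N \<ge> 20" using NA AB unfolding LF_def by auto
  have lvN: "card (ff (lv u)) = N" if "u \<in> V" for u using lvLF[OF that] AB NA NB by auto
  have mF: "image_mset face_len (mset_set FF) = {#N, N#} + replicate_mset (card SF) sz"
  proof -
    have "mset_set FF = mset_set LF + mset_set SF" using LF_SF mset_set_Union by metis
    moreover have "image_mset face_len (mset_set LF) = {#N, N#}"
      using AB NA NB by (simp add: face_len_def)
    moreover have "image_mset face_len (mset_set SF) = replicate_mset (card SF) sz"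
    proof -
      have "image_mset face_len (mset_set SF) = image_mset (\<lambda>_. sz) (mset_set SF)"
        by (rule image_mset_cong) (simp add: face_len_def SF_card LF_SF(4))
      then show ?thesis by (simp add: image_mset_const_eq)
    qed
    ultimately show ?thesis by simp
  qed
  have fat: "image_mset face_len (faces_at Adj rho u) = {#N#} + replicate_mset (del - 1) sz"
    if u: "u \<in> V" for u
  proof -
    have bu: "big u" using allbig u .
    let ?l = "lv u"
    have lD: "?l \<in> DD" using lv_DD bu .
    have lf: "fst ?l = u" using lv_fst bu .
    have sm: "card (ff d) = sz" if "d \<in> out u" "d \<noteq> ?l" for d
      using small_faces[OF out_DD[OF that(1)] big_small[OF bu that]] .
    have "image_mset face_len (faces_at Adj rho u) = image_mset (\<lambda>d. card (ff d)) (mset_set (out u))"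
      unfolding faces_at_def face_len_def by (simp add: multiset.map_comp o_def)
    moreover have "image_mset (\<lambda>d. card (ff d)) (mset_set (out u)) = {#N#} + replicate_mset (del - 1) sz"
    proof (cases "del = 3")
      case True
      then have o: "out u = {?l, rho ?l, rho (rho ?l)}" using out3[OF lD] lf degs[OF u] by auto
      have dist: "distinct [?l, rho ?l, rho (rho ?l)]"
        using rho_ne1[OF lD] rho_ne2[OF lD] rho_ne1[OF rho_DD[OF lD]] by auto
      have "mset_set (out u) = mset [?l, rho ?l, rho (rho ?l)]"
        using o mset_set_set[OF dist] by simp
      moreover have "card (ff (rho ?l)) = sz" using sm[of "rho ?l"] o rho_ne1[OF lD] by simp
      moreover have "card (ff (rho (rho ?l))) = sz" using sm[of "rho (rho ?l)"] o rho_ne2[OF lD] by simp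
      ultimately show ?thesis using lvN[OF u] True by (simp add: numeral_2_eq_2)
    next
      case False
      then have d4: "del = 4" using del34 by simp
      then have o: "out u = {?l, rho ?l, rho (rho ?l), rho (rho (rho ?l))}" "rho (rho (rho ?l)) \<noteq> ?l"
        using out4[OF lD] lf degs[OF u] by auto
      have o4: "rho (rho (rho (rho ?l))) = ?l" using out4[OF lD] lf degs[OF u] d4 by auto
      have n12: "rho ?l \<noteq> rho (rho ?l)" using rho_ne1[OF rho_DD[OF lD]] by simp
      have n13: "rho ?l \<noteq> rho (rho (rho ?l))" using rho_ne2[OF rho_DD[OF lD]] by simp
      have n23: "rho (rho ?l) \<noteq> rho (rho (rho ?l))" using rho_ne1[OF rho_DD[OF rho_DD[OF lD]]] by simp
      have dist: "distinct [?l, rho ?l, rho (rho ?l), rho (rho (rho ?l))]"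
        using rho_ne1[OF lD] rho_ne2[OF lD] o(2) n12 n13 n23 by auto
      have "mset_set (out u) = mset [?l, rho ?l, rho (rho ?l), rho (rho (rho ?l))]"
        using o mset_set_set[OF dist] by simp
      moreover have "card (ff (rho ?l)) = sz" using sm[of "rho ?l"] o rho_ne1[OF lD] by simp
      moreover have "card (ff (rho (rho ?l))) = sz" using sm[of "rho (rho ?l)"] o rho_ne2[OF lD] by simp
      moreover have "card (ff (rho (rho (rho ?l)))) = sz" using sm[of "rho (rho (rho ?l))"] o by simp
      ultimately show ?thesis using lvN[OF u] d4 by (simp add: numeral_3_eq_3)
    qed
    ultimately show ?thesis by simp
  qed
  show ?thesis
  proof (cases "del = 3")
    case True
    have "2 * card SF = card V" using counts(4) True by simp
    then have cS: "card SF = N" using cVN by simp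
    have "is_prism V Adj rho" unfolding is_prism_def
    proof (intro exI[of _ N] conjI ballI)
      show "3 \<le> N" using N20 by simp
      show "card V = 2 * N" using cVN .
      show "image_mset face_len (mset_set FF) = {#N, N#} + replicate_mset N 4"
        using mF cS True unfolding sz_def by simp
      fix u assume "u \<in> V"
      then show "image_mset face_len (faces_at Adj rho u) = {#4, 4, N#}"
        using fat True unfolding sz_def by (simp add: numeral_2_eq_2)
    qed
    then show ?thesis by simp
  next
    case False
    then have d4: "del = 4" using del34 by simp
    have cS: "card SF = 2 * N" using counts(3)[OF d4] cVN by simp
    have "is_antiprism V Adj rho" unfolding is_antiprism_def
    proof (intro exI[of _ N] conjI ballI)
      show "3 \<le> N" using N20 by simp
      show "card V = 2 * N" using cVN .
      show "image_mset face_len (mset_set FF) = {#N, N#} + replicate_mset (2 * N) 3"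
        using mF cS d4 unfolding sz_def by simp
      fix u assume "u \<in> V"
      then show "image_mset face_len (faces_at Adj rho u) = {#3, 3, 3, N#}"
        using fat d4 unfolding sz_def by (simp add: numeral_3_eq_3)
    qed
    then show ?thesis by simp
  qed
qed

lemma contra: False using final not_prism not_anti by blast

end

theorem lemma2p4:
  fixes V :: "'v set" and Adj :: "'v \<Rightarrow> 'v \<Rightarrow> bool"
    and rho :: "'v \<times> 'v \<Rightarrow> 'v \<times> 'v"
    and v v' :: 'v and \<sigma> \<sigma>' :: "('v \<times> 'v) set"
  assumes "planar_PCC V Adj rho"
    and "v \<in> V" and "v' \<in> V"
    and "\<sigma> \<in># faces_at Adj rho v" and "\<sigma>' \<in># faces_at Adj rho v'"
    and "face_len \<sigma> \<ge> 20" and "face_len \<sigma>' \<ge> 20"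
    and "Adj v v'"
  shows "\<sigma> = \<sigma>' \<and> {v, v'} \<in># face_edges \<sigma>"
proof -
  interpret pcc V Adj rho using assms(1) by unfold_locales
  obtain d where d: "d \<in> out_darts Adj v" "\<sigma> = face_of rho d"
    using assms(4) fin_out unfolding faces_at_def by auto
  obtain d' where d': "d' \<in> out_darts Adj v'" "\<sigma>' = face_of rho d'"
    using assms(5) fin_out unfolding faces_at_def by auto
  have Ld: "Lg d" using d assms(6) unfolding Lg_def face_len_def by simp
  have Ld': "Lg d'" using d' assms(7) unfolding Lg_def face_len_def by simp
  have bv: "big v" unfolding big_def using assms(2) d(1) Ld by blast
  have bv': "big v'" unfolding big_def using assms(3) d'(1) Ld' by blast
  have dl: "d = lv v" using big_uniq[OF bv d(1) Ld] .
  have dl': "d' = lv v'" using big_uniq[OF bv' d'(1) Ld'] .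
  have vv': "(v, v') \<in> darts Adj" using assms(8) in_DD by simp
  have v'v: "(v', v) \<in> darts Adj" using DD_rev[OF vv'] .
  have fe: "{a, b} \<in># face_edges X" if "(a, b) \<in> X" "finite X" for a b X
  proof -
    have m: "(a, b) \<in> set_mset (mset_set X)" using that by simp
    have "{a, b} \<in> (\<lambda>(u, w). {u, w}) ` set_mset (mset_set X)"
      by (rule image_eqI[OF _ m]) simp
    then show ?thesis unfolding face_edges_def in_image_mset .
  qed
  show ?thesis
  proof (cases "Lg (v, v')")
    case True
    have l1: "lv v = (v, v')" using big_uniq[OF bv _ True] vv' DD_out by force
    have "Lg (rho (v', v))" using Lg_rev[OF v'v] True by simp
    then have l2: "lv v' = rho (v', v)" using Lg_big[OF rho_DD[OF v'v]] rho_fst[OF v'v] by auto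
    have s1: "\<sigma> = face_of rho (v, v')" using d(2) dl l1 by simp
    have "\<sigma>' = face_of rho (rho (v', v))" using d'(2) dl' l2 by simp
    then have s2: "\<sigma>' = face_of rho (v, v')" using ff_rev[OF v'v] by simp
    have "(v, v') \<in> \<sigma>" using s1 ff_self by simp
    then have "{v, v'} \<in># face_edges \<sigma>" using fe ff_fin[OF vv'] s1 by simp
    then show ?thesis using s1 s2 by simp
  next
    case False
    show ?thesis
    proof (cases "Lg (v', v)")
      case True
      have l1: "lv v' = (v', v)" using big_uniq[OF bv' _ True] v'v DD_out by force
      have "Lg (rho (v, v'))" using Lg_rev[OF vv'] True by simp
      then have l2: "lv v = rho (v, v')" using Lg_big[OF rho_DD[OF vv']] rho_fst[OF vv'] by auto
      have s1: "\<sigma>' = face_of rho (v', v)" using d'(2) dl' l1 by simp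
      have "\<sigma> = face_of rho (rho (v, v'))" using d(2) dl l2 by simp
      then have s2: "\<sigma> = face_of rho (v', v)" using ff_rev[OF vv'] by simp
      have "(v', v) \<in> \<sigma>" using s2 ff_self by simp
      then have "{v', v} \<in># face_edges \<sigma>" using fe ff_fin[OF v'v] s2 by simp
      then have "{v, v'} \<in># face_edges \<sigma>" by (simp add: insert_commute)
      then show ?thesis using s1 s2 by simp
    next
      case F2: False
      have "bad v v'" unfolding bad_def using assms(8) bv bv' False F2 by simp
      then interpret pccb V Adj rho v v' by unfold_locales
      show ?thesis using contra by simp
    qed
  qed
qed

end
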